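(* Let $(\Omega,\mathcal F,P,(\mathcal F_t)_{t=0}^T)$ be a filtered probability space with $\mathcal F_0$ trivial, and let $I$ be a finite set of agents. For each $i\in I$ let $(E^i_t)_{t=0}^{T-1}$ be an adapted nonnegative process (business-as-usual emissions of agent $i$ in $[t,t+1]$), and let $C^i_t:[0,\infty)\times\Omega\to\mathbb R$ be $\mathcal B([0,\infty))\otimes\mathcal F_t$-measurable with $x\mapsto C^i_t(x)(\omega)$ strictly convex and continuous and $C^i_t(0)=0$ for each $\omega$. Define the abatement volume $c^i_t(a)(\omega)=\arg\min\{C^i_t(x)(\omega)-ax: x\in[0,E^i_t(\omega)]\}$ for $a\ge 0$. Let $\pi>0$ be the penalty, and let $\gamma^i$, $i\in I$, be $\mathcal F_T$-measurable random variables (effective initial allocations) such that the $\mathcal F_{T-1}$-conditional distribution of $\sum_{i\in I}\gamma^i$ has almost surely no point masses (in particular $P(\sum_i\gamma^i=X)=0$ for every $\mathcal F_{T-1}$-measurable $X$). Let $U^i:\mathbb R\to\mathbb R$ be continuous, strictly increasing and concave, and $u^i(X)=E(U^i(X))$ whenever this expectation is finite or $+\infty$. For an adapted price process $A=(A_t)_{t=0}^T$ and an admissible policy $(\vartheta^i,\xi^i)\in\mathcal U^i:=\{(\vartheta^i,\xi^i): 0\le \xi^i_t\le E^i_t,\ t=0,\dots,T-1\}$ (with $\vartheta^i=(\vartheta^i_t)_{t=0}^T$, $\xi^i=(\xi^i_t)_{t=0}^{T-1}$ adapted) define $$L^{A,i}(\vartheta^i,\xi^i)=-\sum_{t=0}^{T-1}\big(\vartheta^i_tA_t+C^i_t(\xi^i_t)\big)-\vartheta^i_TA_T-\pi\Big(\sum_{t=0}^{T-1}(E^i_t-\xi^i_t-\vartheta^i_t)-\gamma^i-\vartheta^i_T\Big)^+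 .$$ Suppose $A^*=(A^*_t)_{t=0}^T$ is an equilibrium allowance price process, i.e. for each $i\in I$ there is $(\vartheta^{*i},\xi^{*i})\in\mathcal U^i$ with $u^i(L^{A^*,i}(\vartheta^{*i},\xi^{*i}))$ finite such that (i) $\sum_{i\in I}\vartheta^{*i}_t=0$ for all $t=0,\dots,T$, and (ii) $u^i(L^{A^*,i}(\vartheta^{*i},\xi^{*i}))\ge u^i(L^{A^*,i}(\vartheta^i,\xi^i))$ for every $(\vartheta^i,\xi^i)\in\mathcal U^i$ for which the right-hand side exists. Then: (a) there exists a probability measure $Q$ equivalent to $P$ such that $(A^*_t)_{t=0}^T$ is a $Q$-martingale; (b) for each $i\in I$, $\xi^{*i}_t=c^i_t(A^*_t)$ for $t=0,\dots,T-1$; (c) $A^*_T=\pi\,1_{\{\sum_{i\in I}(\sum_{t=0}^{T-1}(E^i_t-\xi^{*i}_t)-\gamma^i)\ge 0\}}$.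
   Context: Emissions market model: $\vartheta^i_t$ is the change at time $t$ in the number of allowances held by agent $i$, $\xi^i_t$ is the emission reduction of agent $i$ in $[t,t+1]$, $A_t$ is the allowance spot price, and a penalty $\pi$ is paid at $T$ per uncovered pollutant unit. The argmin defining $c^i_t(a)(\omega)$ is attained at a unique point by strict convexity and continuity. *)

theory Defs
  imports "HOL-Probability.Probability"
begin

definition strict_convex_on :: "real set \<Rightarrow> (real \<Rightarrow> real) \<Rightarrow> bool" where
  "strict_convex_on S f \<longleftrightarrow>
     (\<forall>x\<in>S. \<forall>y\<in>S. \<forall>u::real. x \<noteq> y \<longrightarrow> 0 < u \<longrightarrow> u < 1 \<longrightarrow>
        f (u * x + (1 - u) * y) < u * f x + (1 - u) * f y)"

definition filtration_on :: "'a measure \<Rightarrow> (nat \<Rightarrow> 'a measure) \<Rightarrow> nat \<Rightarrow> bool" where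
  "filtration_on M F T \<longleftrightarrow>
     (\<forall>t\<le>T. subalgebra M (F t)) \<and>
     (\<forall>s t. s \<le> t \<longrightarrow> t \<le> T \<longrightarrow> sets (F s) \<subseteq> sets (F t))"

definition equiv_prob :: "'a measure \<Rightarrow> 'a measure \<Rightarrow> bool" where
  "equiv_prob Q M \<longleftrightarrow> prob_space Q \<and> sets Q = sets M \<and>
     (\<forall>N\<in>sets M. emeasure Q N = 0 \<longleftrightarrow> emeasure M N = 0)"

definition martingale_on :: "'a measure \<Rightarrow> (nat \<Rightarrow> 'a measure) \<Rightarrow> nat \<Rightarrow> (nat \<Rightarrow> 'a \<Rightarrow> real) \<Rightarrow> bool" where
  "martingale_on Q F T A \<longleftrightarrow>
     (\<forall>t\<le>T. A t \<in> borel_measurable (F t) \<and> integrable Q (A t)) \<and>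
     (\<forall>s t. s \<le> t \<longrightarrow> t \<le> T \<longrightarrow> (AE \<omega> in Q. real_cond_exp Q (F s) (A t) \<omega> = A s \<omega>))"

text \<open>The G-conditional distribution of Y (given by a regular version, a kernel \<kappa>)
  has almost surely no point masses.\<close>
definition cond_distr_no_atoms :: "'a measure \<Rightarrow> 'a measure \<Rightarrow> ('a \<Rightarrow> real) \<Rightarrow> bool" where
  "cond_distr_no_atoms M G Y \<longleftrightarrow>
     (\<exists>\<kappa> :: 'a \<Rightarrow> real measure.
        (\<forall>\<omega>\<in>space M. prob_space (\<kappa> \<omega>) \<and> sets (\<kappa> \<omega>) = sets borel) \<and>
        (\<forall>B\<in>sets borel.
           (\<lambda>\<omega>. measure (\<kappa> \<omega>) B) \<in> borel_measurable G \<and>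
           (\<forall>D\<in>sets G. (LINT \<omega>:D|M. measure (\<kappa> \<omega>) B) = measure M (D \<inter> Y -` B \<inter> space M))) \<and>
        (AE \<omega> in M. \<forall>x. measure (\<kappa> \<omega>) {x} = 0))"

text \<open>Expected utility \<open>E(f)\<close> exists (is finite or +\<infinity>): f measurable, negative part integrable.\<close>
definition util_exists :: "'a measure \<Rightarrow> ('a \<Rightarrow> real) \<Rightarrow> bool" where
  "util_exists M f \<longleftrightarrow> f \<in> borel_measurable M \<and> (\<integral>\<^sup>+\<omega>. ennreal (- f \<omega>) \<partial>M) < \<infinity>"

text \<open>Extended-real value of \<open>E(f)\<close> (meaningful when util_exists holds).\<close>
definition util_val :: "'a measure \<Rightarrow> ('a \<Rightarrow> real) \<Rightarrow> ereal" where
  "util_val M f = enn2ereal (\<integral>\<^sup>+\<omega>. ennreal (f \<omega>) \<partial>M) - enn2ereal (\<integral>\<^sup>+\<omega>. ennreal (- f \<omega>) \<partial>M)"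

definition admissible :: "'a measure \<Rightarrow> (nat \<Rightarrow> 'a measure) \<Rightarrow> nat \<Rightarrow> (nat \<Rightarrow> 'a \<Rightarrow> real)
    \<Rightarrow> (nat \<Rightarrow> 'a \<Rightarrow> real) \<Rightarrow> (nat \<Rightarrow> 'a \<Rightarrow> real) \<Rightarrow> bool" where
  "admissible M F T E \<theta> \<xi> \<longleftrightarrow>
     (\<forall>t\<le>T. \<theta> t \<in> borel_measurable (F t)) \<and>
     (\<forall>t<T. \<xi> t \<in> borel_measurable (F t) \<and> (\<forall>\<omega>\<in>space M. 0 \<le> \<xi> t \<omega> \<and> \<xi> t \<omega> \<le> E t \<omega>))"

definition wealth :: "nat \<Rightarrow> real \<Rightarrow> (nat \<Rightarrow> 'a \<Rightarrow> real) \<Rightarrow> (nat \<Rightarrow> real \<Rightarrow> 'a \<Rightarrow> real)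
    \<Rightarrow> (nat \<Rightarrow> 'a \<Rightarrow> real) \<Rightarrow> ('a \<Rightarrow> real) \<Rightarrow> (nat \<Rightarrow> 'a \<Rightarrow> real) \<Rightarrow> (nat \<Rightarrow> 'a \<Rightarrow> real) \<Rightarrow> 'a \<Rightarrow> real" where
  "wealth T \<pi> A C E \<gamma> \<theta> \<xi> \<omega> =
     - (\<Sum>t<T. \<theta> t \<omega> * A t \<omega> + C t (\<xi> t \<omega>) \<omega>) - \<theta> T \<omega> * A T \<omega>
     - \<pi> * max 0 ((\<Sum>t<T. E t \<omega> - \<xi> t \<omega> - \<theta> t \<omega>) - \<gamma> \<omega> - \<theta> T \<omega>)"

definition abatement :: "(real \<Rightarrow> 'a \<Rightarrow> real) \<Rightarrow> ('a \<Rightarrow> real) \<Rightarrow> real \<Rightarrow> 'a \<Rightarrow> real" where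
  "abatement C E a \<omega> =
     (THE x. x \<in> {0..E \<omega>} \<and> (\<forall>y\<in>{0..E \<omega>}. C x \<omega> - a * x \<le> C y \<omega> - a * y))"

end

theory Submission
  imports Defs
begin

lemma argmin_unique:
  fixes c :: "real \<Rightarrow> real"
  assumes sc: "strict_convex_on {0..} c"
    and x: "x \<in> {0..e}" and z: "z \<in> {0..e}"
    and mx: "\<forall>y\<in>{0..e}. c x - a * x \<le> c y - a * y"
    and mz: "\<forall>y\<in>{0..e}. c z - a * z \<le> c y - a * y"
  shows "x = z"
proof (rule ccontr)
  assume ne: "x \<noteq> z"
  define m where "m = (1/2) * x + (1 - 1/2) * z"
  have "c m < (1/2) * c x + (1 - 1/2) * c z"
  proof -
    have "x \<in> {0..}" "z \<in> {0..}" using x z by auto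
    moreover have "(1/2::real) > 0" "(1/2::real) < 1" by auto
    ultimately show ?thesis using sc ne unfolding strict_convex_on_def m_def by blast
  qed
  moreover have "m \<in> {0..e}" using x z unfolding m_def by auto
  then have "c x - a * x \<le> c m - a * m" "c z - a * z \<le> c m - a * m" using mx mz by auto
  ultimately show False unfolding m_def by (simp add: algebra_simps)
qed

lemma abatement_eq:
  fixes C :: "real \<Rightarrow> 'a \<Rightarrow> real"
  assumes sc: "strict_convex_on {0..} (\<lambda>x. C x \<omega>)"
    and z: "z \<in> {0..E \<omega>}"
    and mz: "\<forall>y\<in>{0..E \<omega>}. C z \<omega> - a * z \<le> C y \<omega> - a * y"
  shows "abatement C E a \<omega> = z"
  unfolding abatement_def
proof (rule the_equality)
  show "z \<in> {0..E \<omega>} \<and> (\<forall>y\<in>{0..E \<omega>}. C z \<omega> - a * z \<le> C y \<omega> - a * y)" using z mz by blast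
next
  fix x assume "x \<in> {0..E \<omega>} \<and> (\<forall>y\<in>{0..E \<omega>}. C x \<omega> - a * x \<le> C y \<omega> - a * y)"
  then show "x = z" using argmin_unique[OF sc _ z _ mz] by blast
qed

lemma rat_dense_min:
  fixes c :: "real \<Rightarrow> real"
  assumes cont: "continuous_on {0..} c" and e: "0 \<le> e"
    and hz: "\<forall>r\<in>\<rat>. 0 \<le> r \<and> r \<le> 1 \<longrightarrow> c z - a * z \<le> c (r * e) - a * (r * e)"
    and y: "y \<in> {0..e}"
  shows "c z - a * z \<le> c y - a * y"
proof (cases "y = 0 \<or> e = 0")
  case True
  then have "y = 0 * e" using y by auto
  then show ?thesis using hz by auto
next
  case False
  then have ypos: "0 < y" and epos: "0 < e" using y e by auto
  define q where "q = y / e"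
  have q: "0 < q" "q \<le> 1" using ypos epos y unfolding q_def by auto
  have "\<forall>n. \<exists>r\<in>\<rat>. max 0 (q - 1 / Suc n) < r \<and> r < q"
  proof
    fix n
    have "max 0 (q - 1 / Suc n) < q" using q by auto
    then show "\<exists>r\<in>\<rat>. max 0 (q - 1 / Suc n) < r \<and> r < q" using Rats_dense_in_real by blast
  qed
  then obtain r where r: "\<And>n. r n \<in> \<rat>" "\<And>n. max 0 (q - 1 / Suc n) < r n" "\<And>n. r n < q"
    by metis
  have rl: "r \<longlonglongrightarrow> q"
  proof (rule real_tendsto_sandwich[where f="\<lambda>n. q - 1 / Suc n" and h="\<lambda>n. q"])
    show "\<forall>\<^sub>F n in sequentially. q - 1 / real (Suc n) \<le> r n" using r(2) by (intro always_eventually allI less_imp_le[OF le_less_trans[OF max.cobounded2]]) auto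
    show "\<forall>\<^sub>F n in sequentially. r n \<le> q" using r(3) by (intro always_eventually allI less_imp_le) auto
    have l0: "(\<lambda>n. 1 / real (Suc n)) \<longlonglongrightarrow> 0" using LIMSEQ_inverse_real_of_nat by (simp add: inverse_eq_divide)
    show "(\<lambda>n. q - 1 / real (Suc n)) \<longlonglongrightarrow> q" using tendsto_diff[OF tendsto_const[of q] l0] by simp
  qed simp
  have h: "continuous_on {0..} (\<lambda>x. c x - a * x)" using cont by (intro continuous_intros) auto
  have "(\<lambda>n. r n * e) \<longlonglongrightarrow> q * e" by (intro tendsto_intros rl)
  then have re: "(\<lambda>n. r n * e) \<longlonglongrightarrow> y" unfolding q_def using epos by simp
  have "(\<lambda>n. (\<lambda>x. c x - a * x) (r n * e)) \<longlonglongrightarrow> c y - a * y"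
    by (rule continuous_on_tendsto_compose[OF h re]) (use y r(2) epos in \<open>auto intro!: always_eventually mult_nonneg_nonneg less_imp_le\<close>)
  moreover have "\<forall>n. c z - a * z \<le> (\<lambda>n. (\<lambda>x. c x - a * x) (r n * e)) n"
  proof
    fix n
    have "0 \<le> r n" "r n \<le> 1" using r(2)[of n] r(3)[of n] q by (auto intro: less_imp_le[OF le_less_trans[OF max.cobounded1]])
    then show "c z - a * z \<le> (\<lambda>n. (\<lambda>x. c x - a * x) (r n * e)) n" using hz r(1)[of n] by simp
  qed
  ultimately show ?thesis by (intro LIMSEQ_le_const) auto
qed

lemma no_atom_AE:
  assumes P: "prob_space M" and sub: "subalgebra M G" and na: "cond_distr_no_atoms M G Y"
    and Ym[measurable]: "Y \<in> borel_measurable M" and XG: "X \<in> borel_measurable G"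
  shows "AE \<omega> in M. Y \<omega> \<noteq> X \<omega>"
proof -
  interpret prob_space M by (rule P)
  obtain \<kappa> :: "'a \<Rightarrow> real measure" where
    kp: "\<And>\<omega>. \<omega> \<in> space M \<Longrightarrow> prob_space (\<kappa> \<omega>) \<and> sets (\<kappa> \<omega>) = sets borel" and
    km: "\<And>B. B \<in> sets borel \<Longrightarrow> (\<lambda>\<omega>. measure (\<kappa> \<omega>) B) \<in> borel_measurable G" and
    ki: "\<And>B D. B \<in> sets borel \<Longrightarrow> D \<in> sets G \<Longrightarrow> (LINT \<omega>:D|M. measure (\<kappa> \<omega>) B) = measure M (D \<inter> Y -` B \<inter> space M)" and
    kn: "AE \<omega> in M. \<forall>x. measure (\<kappa> \<omega>) {x} = 0"
    using na unfolding cond_distr_no_atoms_def by blast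
  have Xm[measurable]: "X \<in> borel_measurable M" using measurable_from_subalg[OF sub XG] .
  have kmM: "(\<lambda>\<omega>. measure (\<kappa> \<omega>) B) \<in> borel_measurable M" if "B \<in> sets borel" for B
    using measurable_from_subalg[OF sub km[OF that]] .
  have spG: "space G = space M" using sub unfolding subalgebra_def by simp
  define S0 where "S0 = {\<omega>\<in>space M. Y \<omega> = X \<omega>}"
  have S0: "S0 \<in> sets M" unfolding S0_def by measurable
  define J where "J = (\<lambda>(m::nat) (k::int). {real_of_int k / 2^m ..< (real_of_int k + 1) / 2^m})"
  define fl where "fl = (\<lambda>(m::nat) \<omega>. \<lfloor>X \<omega> * 2^m\<rfloor>)"
  define f where "f = (\<lambda>m \<omega>. measure (\<kappa> \<omega>) (J m (fl m \<omega>)))"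
  have Jb: "J m k \<in> sets borel" for m k unfolding J_def by simp
  have flG: "fl m \<in> measurable G (count_space UNIV)" for m
    unfolding fl_def using XG by measurable
  have flM: "fl m \<in> measurable M (count_space UNIV)" for m
    unfolding fl_def by measurable
  have fm: "f m \<in> borel_measurable M" for m
    unfolding f_def by (rule measurable_compose_countable[OF _ flM]) (rule kmM[OF Jb])
  have inJ: "X \<omega> \<in> J m (fl m \<omega>)" for m \<omega>
  proof -
    have "real_of_int \<lfloor>X \<omega> * 2^m\<rfloor> \<le> X \<omega> * 2^m" by (rule of_int_floor_le)
    moreover have "X \<omega> * 2^m < real_of_int \<lfloor>X \<omega> * 2^m\<rfloor> + 1" by (rule real_of_int_floor_add_one_gt)
    ultimately show ?thesis unfolding J_def fl_def by (auto simp: divide_simps)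
  qed
  have stepA: "emeasure M S0 \<le> (\<integral>\<^sup>+\<omega>. ennreal (f m \<omega>) \<partial>M)" for m
  proof -
    define D where "D = (\<lambda>k. {\<omega>\<in>space M. fl m \<omega> = k})"
    have DG: "D k \<in> sets G" for k
    proof -
      have "D k = fl m -` {k} \<inter> space G" unfolding D_def spG by auto
      then show ?thesis using measurable_sets[OF flG[of m], of "{k}"] by simp
    qed
    have DM: "D k \<in> sets M" for k using DG sub unfolding subalgebra_def by auto
    define S where "S = (\<Union>k. D k \<inter> Y -` J m k \<inter> space M)"
    have SM: "D k \<inter> Y -` J m k \<inter> space M \<in> sets M" for k
      using sets.Int[OF DM measurable_sets[OF Ym Jb]] by (simp add: Int_assoc)
    have sub0: "S0 \<subseteq> S" unfolding S0_def S_def D_def using inJ by fastforce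
    have disj: "disjoint_family_on (\<lambda>k. D k \<inter> Y -` J m k \<inter> space M) UNIV"
      unfolding disjoint_family_on_def D_def by auto
    have "emeasure M S = (\<integral>\<^sup>+k. emeasure M (D k \<inter> Y -` J m k \<inter> space M) \<partial>count_space UNIV)"
      unfolding S_def using emeasure_UN_countable[OF SM _ disj] by simp
    also have "\<dots> = (\<integral>\<^sup>+k. \<integral>\<^sup>+\<omega>. ennreal (indicator (D k) \<omega> * measure (\<kappa> \<omega>) (J m k)) \<partial>M \<partial>count_space UNIV)"
    proof (rule nn_integral_cong)
      fix k
      have int: "integrable M (\<lambda>\<omega>. indicator (D k) \<omega> * measure (\<kappa> \<omega>) (J m k))"
      proof (rule integrable_const_bound[where B=1])
        show "AE x in M. norm (indicator (D k) x * measure (\<kappa> x) (J m k)) \<le> (1::real)"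
          using kp by (intro AE_I2) (auto simp: indicator_def prob_space.prob_le_1)
        show "(\<lambda>\<omega>. indicator (D k) \<omega> * measure (\<kappa> \<omega>) (J m k)) \<in> borel_measurable M"
          using DM kmM[OF Jb] by measurable
      qed
      have "emeasure M (D k \<inter> Y -` J m k \<inter> space M) = ennreal (measure M (D k \<inter> Y -` J m k \<inter> space M))"
        by (simp add: emeasure_eq_measure)
      also have "\<dots> = ennreal (LINT \<omega>:D k|M. measure (\<kappa> \<omega>) (J m k))" using ki[OF Jb DG] by simp
      also have "\<dots> = ennreal (\<integral>\<omega>. indicator (D k) \<omega> * measure (\<kappa> \<omega>) (J m k) \<partial>M)"
        unfolding set_lebesgue_integral_def by simp
      also have "\<dots> = (\<integral>\<^sup>+\<omega>. ennreal (indicator (D k) \<omega> * measure (\<kappa> \<omega>) (J m k)) \<partial>M)"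
        by (rule nn_integral_eq_integral[OF int, symmetric]) (use kp in \<open>auto intro!: AE_I2 simp: indicator_def\<close>)
      finally show "emeasure M (D k \<inter> Y -` J m k \<inter> space M) = (\<integral>\<^sup>+\<omega>. ennreal (indicator (D k) \<omega> * measure (\<kappa> \<omega>) (J m k)) \<partial>M)" .
    qed
    also have "\<dots> = (\<integral>\<^sup>+\<omega>. \<integral>\<^sup>+k. ennreal (indicator (D k) \<omega> * measure (\<kappa> \<omega>) (J m k)) \<partial>count_space UNIV \<partial>M)"
      by (rule nn_integral_count_space_nn_integral[symmetric]) (use DM kmM[OF Jb] in auto)
    also have "\<dots> = (\<integral>\<^sup>+\<omega>. ennreal (f m \<omega>) \<partial>M)"
    proof (rule nn_integral_cong)
      fix \<omega> assume \<omega>: "\<omega> \<in> space M"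
      have "(\<integral>\<^sup>+k. ennreal (indicator (D k) \<omega> * measure (\<kappa> \<omega>) (J m k)) \<partial>count_space UNIV)
          = (\<integral>\<^sup>+k. ennreal (measure (\<kappa> \<omega>) (J m k)) * indicator {fl m \<omega>} k \<partial>count_space UNIV)"
        using \<omega> by (intro nn_integral_cong) (auto simp: D_def indicator_def)
      also have "\<dots> = ennreal (f m \<omega>)" unfolding f_def by simp
      finally show "(\<integral>\<^sup>+k. ennreal (indicator (D k) \<omega> * measure (\<kappa> \<omega>) (J m k)) \<partial>count_space UNIV) = ennreal (f m \<omega>)" .
    qed
    finally have "emeasure M S = (\<integral>\<^sup>+\<omega>. ennreal (f m \<omega>) \<partial>M)" .
    moreover have "S \<in> sets M" unfolding S_def by (rule sets.countable_UN) (use SM in auto)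
    ultimately show ?thesis using emeasure_mono[OF sub0, of M] by simp
  qed
  have stepB: "AE \<omega> in M. (\<lambda>m. ennreal (f m \<omega>)) \<longlonglongrightarrow> ennreal 0"
    using kn AE_space
  proof eventually_elim
    case (elim \<omega>)
    interpret K: prob_space "\<kappa> \<omega>" using kp elim(2) by blast
    have sK: "sets (\<kappa> \<omega>) = sets borel" using kp elim(2) by blast
    define x where "x = X \<omega>"
    define Kset where "Kset = (\<lambda>m::nat. {x - (1/2)^m .. x + (1/2)^m})"
    have dec: "decseq Kset" unfolding Kset_def decseq_def
      by (auto intro: order_trans[OF _ power_decreasing] simp: diff_le_eq)
    have KI: "(\<Inter>m. Kset m) = {x}"
    proof (rule set_eqI, rule iffI)
      fix z assume z: "z \<in> (\<Inter>m. Kset m)"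
      show "z \<in> {x}"
      proof (rule ccontr)
        assume "z \<notin> {x}"
        then have "0 < \<bar>z - x\<bar>" by auto
        then obtain n where "(1/2::real)^n < \<bar>z - x\<bar>" using real_arch_pow_inv[of "\<bar>z - x\<bar>" "1/2"] by auto
        moreover have "z \<in> Kset n" using z by auto
        ultimately show False unfolding Kset_def by auto
      qed
    qed (auto simp: Kset_def)
    have "(\<lambda>m. measure (\<kappa> \<omega>) (Kset m)) \<longlonglongrightarrow> measure (\<kappa> \<omega>) (\<Inter>m. Kset m)"
      by (rule K.finite_Lim_measure_decseq[OF _ dec]) (auto simp: Kset_def sK)
    then have lim: "(\<lambda>m. measure (\<kappa> \<omega>) (Kset m)) \<longlonglongrightarrow> 0" using elim(1) KI by simp
    have le: "f m \<omega> \<le> measure (\<kappa> \<omega>) (Kset m)" for m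
    proof -
      have "J m (fl m \<omega>) \<subseteq> Kset m"
      proof -
        have a: "real_of_int \<lfloor>X \<omega> * 2^m\<rfloor> \<le> X \<omega> * 2^m" by (rule of_int_floor_le)
        have b: "X \<omega> * 2^m < real_of_int \<lfloor>X \<omega> * 2^m\<rfloor> + 1" by (rule real_of_int_floor_add_one_gt)
        have p: "(1/2::real)^m = 1 / 2^m" by (simp add: power_one_over)
        show ?thesis unfolding J_def fl_def Kset_def x_def p
          apply (auto simp: divide_simps) using a b by linarith+
      qed
      then show ?thesis unfolding f_def by (intro K.finite_measure_mono) (auto simp: Kset_def sK J_def)
    qed
    have "(\<lambda>m. f m \<omega>) \<longlonglongrightarrow> 0"
      by (rule real_tendsto_sandwich[OF _ _ tendsto_const lim]) (use le in \<open>auto simp: f_def intro!: always_eventually\<close>)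
    then show ?case by (intro tendsto_ennrealI)
  qed
  have stepC: "(\<lambda>m. (\<integral>\<^sup>+\<omega>. ennreal (f m \<omega>) \<partial>M)) \<longlonglongrightarrow> (\<integral>\<^sup>+\<omega>. ennreal 0 \<partial>M)"
  proof (rule nn_integral_dominated_convergence[where w="\<lambda>_. 1"])
    show "\<And>j. AE x in M. ennreal (f j x) \<le> 1"
      using kp by (intro AE_I2) (auto simp: f_def prob_space.prob_le_1)
    show "(\<integral>\<^sup>+x. 1 \<partial>M) < \<infinity>" by (simp add: emeasure_space_1)
  qed (use fm stepB in auto)
  then have "(\<lambda>m. (\<integral>\<^sup>+\<omega>. ennreal (f m \<omega>) \<partial>M)) \<longlonglongrightarrow> 0" by simp
  then have "emeasure M S0 \<le> 0"
    by (rule tendsto_lowerbound) (use stepA in auto)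
  then have "emeasure M S0 = 0" by simp
  then show ?thesis using AE_iff_measurable[OF S0, of "\<lambda>\<omega>. Y \<omega> \<noteq> X \<omega>"] unfolding S0_def by auto
qed

lemma KEY:
  assumes sfs: "sigma_finite_subalgebra M G" and W[measurable]: "W \<in> borel_measurable M"
    and Wi: "integrable M W" and Wn: "AE \<omega> in M. 0 \<le> W \<omega>"
    and g[measurable]: "g \<in> borel_measurable G"
  shows "(\<integral>\<^sup>+\<omega>. g \<omega> * ennreal (W \<omega>) \<partial>M) = (\<integral>\<^sup>+\<omega>. g \<omega> * ennreal (real_cond_exp M G W \<omega>) \<partial>M)"
proof -
  interpret sigma_finite_subalgebra M G by (rule sfs)
  have a0: "AE \<omega> in M. nn_cond_exp M G (\<lambda>\<omega>. ennreal (- W \<omega>)) \<omega> = nn_cond_exp M G (\<lambda>\<omega>. 0) \<omega>"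
    by (rule nn_cond_exp_cong) (use Wn in \<open>auto simp: ennreal_neg\<close>)
  have a1: "AE \<omega> in M. (\<lambda>\<omega>. 0::ennreal) \<omega> = nn_cond_exp M G (\<lambda>\<omega>. 0) \<omega>"
    by (rule nn_cond_exp_F_meas) simp
  have "(\<integral>\<^sup>+\<omega>. nn_cond_exp M G (\<lambda>\<omega>. ennreal (W \<omega>)) \<omega> \<partial>M) = (\<integral>\<^sup>+\<omega>. 1 * nn_cond_exp M G (\<lambda>\<omega>. ennreal (W \<omega>)) \<omega> \<partial>M)"
    by simp
  also have "\<dots> = (\<integral>\<^sup>+\<omega>. 1 * ennreal (W \<omega>) \<partial>M)" by (rule nn_cond_exp_intg) auto
  also have "\<dots> \<noteq> \<infinity>" using integrableD(2)[OF Wi] by simp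
  finally have fin: "AE \<omega> in M. nn_cond_exp M G (\<lambda>\<omega>. ennreal (W \<omega>)) \<omega> \<noteq> \<infinity>"
    by (intro nn_integral_PInf_AE) auto
  have ae: "AE \<omega> in M. nn_cond_exp M G (\<lambda>\<omega>. ennreal (W \<omega>)) \<omega> = ennreal (real_cond_exp M G W \<omega>)"
    using a0 a1 fin
  proof eventually_elim
    case (elim \<omega>)
    then show ?case unfolding real_cond_exp_def by (simp add: ennreal_enn2real_if)
  qed
  have "(\<integral>\<^sup>+\<omega>. g \<omega> * ennreal (W \<omega>) \<partial>M) = (\<integral>\<^sup>+\<omega>. g \<omega> * nn_cond_exp M G (\<lambda>\<omega>. ennreal (W \<omega>)) \<omega> \<partial>M)"
    by (rule nn_cond_exp_intg[symmetric]) auto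
  also have "\<dots> = (\<integral>\<^sup>+\<omega>. g \<omega> * ennreal (real_cond_exp M G W \<omega>) \<partial>M)"
    by (rule nn_integral_cong_AE) (use ae in eventually_elim; simp)
  finally show ?thesis .
qed


lemma emul: "0 \<le> a \<Longrightarrow> 0 \<le> b \<Longrightarrow> x * ennreal a * ennreal b = x * ennreal (a * b)"
  by (simp add: ennreal_mult mult.assoc)

lemma one_step:
  fixes Y0 Y1 :: "'a \<Rightarrow> real"
  assumes P: "prob_space M" and subG: "subalgebra M G" and subH: "subalgebra M H" and GH: "sets G \<subseteq> sets H"
    and Y0[measurable]: "Y0 \<in> borel_measurable G" and Y1[measurable]: "Y1 \<in> borel_measurable H"
    and b0: "\<And>\<omega>. \<omega> \<in> space M \<Longrightarrow> 0 \<le> Y0 \<omega> \<and> Y0 \<omega> \<le> K"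
    and b1: "\<And>\<omega>. \<omega> \<in> space M \<Longrightarrow> 0 \<le> Y1 \<omega> \<and> Y1 \<omega> \<le> K"
    and na1: "\<And>B. B \<in> sets G \<Longrightarrow> (AE \<omega> in M. \<omega> \<in> B \<longrightarrow> Y0 \<omega> \<le> Y1 \<omega>) \<Longrightarrow> (AE \<omega> in M. \<omega> \<in> B \<longrightarrow> Y1 \<omega> = Y0 \<omega>)"
    and na2: "\<And>B. B \<in> sets G \<Longrightarrow> (AE \<omega> in M. \<omega> \<in> B \<longrightarrow> Y1 \<omega> \<le> Y0 \<omega>) \<Longrightarrow> (AE \<omega> in M. \<omega> \<in> B \<longrightarrow> Y1 \<omega> = Y0 \<omega>)"
  shows "\<exists>Z. Z \<in> borel_measurable H \<and> (\<forall>\<omega>. 0 \<le> Z \<omega>) \<and> (AE \<omega> in M. 0 < Z \<omega>) \<and>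
     (\<forall>g\<in>borel_measurable G. (\<integral>\<^sup>+\<omega>. g \<omega> * ennreal (Z \<omega>) \<partial>M) = (\<integral>\<^sup>+\<omega>. g \<omega> \<partial>M)) \<and>
     (\<forall>g\<in>borel_measurable G. (\<integral>\<^sup>+\<omega>. g \<omega> * ennreal (Z \<omega> * Y1 \<omega>) \<partial>M) = (\<integral>\<^sup>+\<omega>. g \<omega> * ennreal (Y0 \<omega>) \<partial>M))"
proof -
  interpret prob_space M by (rule P)
  interpret finite_measure_subalgebra M G by unfold_locales (rule subG)
  have sfs: "sigma_finite_subalgebra M G" by unfold_locales
  have K0: "0 \<le> K"
  proof -
    obtain \<omega> where "\<omega> \<in> space M" using not_empty by blast
    then show ?thesis using b0 by force
  qed
  have spG: "space G = space M" and spH: "space H = space M"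
    using subG subH unfolding subalgebra_def by auto
  have HG: "subalgebra H G" unfolding subalgebra_def using GH spG spH by auto
  have gH: "f \<in> borel_measurable H" if "f \<in> borel_measurable G" for f :: "'a \<Rightarrow> real"
    using measurable_from_subalg[OF HG that] .
  have gM: "f \<in> borel_measurable M" if "f \<in> borel_measurable G" for f :: "'a \<Rightarrow> real"
    using measurable_from_subalg[OF subG that] .
  have hM: "f \<in> borel_measurable M" if "f \<in> borel_measurable H" for f :: "'a \<Rightarrow> real"
    using measurable_from_subalg[OF subH that] .
  have Y0H[measurable]: "Y0 \<in> borel_measurable H" by (rule gH[OF Y0])
  have Y0M[measurable]: "Y0 \<in> borel_measurable M" by (rule gM[OF Y0])
  have Y1M[measurable]: "Y1 \<in> borel_measurable M" by (rule hM[OF Y1])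
  define X where "X = (\<lambda>\<omega>. Y1 \<omega> - Y0 \<omega>)"
  define Xp where "Xp = (\<lambda>\<omega>. max 0 (X \<omega>))"
  define Xm where "Xm = (\<lambda>\<omega>. max 0 (- X \<omega>))"
  have XH[measurable]: "X \<in> borel_measurable H" unfolding X_def by measurable
  have XpM[measurable]: "Xp \<in> borel_measurable M" "Xm \<in> borel_measurable M" unfolding Xp_def Xm_def X_def by measurable
  have Xpb: "0 \<le> Xp \<omega> \<and> Xp \<omega> \<le> K" "0 \<le> Xm \<omega> \<and> Xm \<omega> \<le> K" if "\<omega> \<in> space M" for \<omega>
    using b0[OF that] b1[OF that] unfolding Xp_def Xm_def X_def by auto
  have bint: "integrable M f" if "f \<in> borel_measurable M" "\<And>\<omega>. \<omega> \<in> space M \<Longrightarrow> \<bar>f \<omega>\<bar> \<le> B" for f :: "'a \<Rightarrow> real" and B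
    by (rule integrable_const_bound[where B=B]) (use that in auto)
  have Xpi: "integrable M Xp" "integrable M Xm"
    using Xpb by (auto intro!: bint[of _ K])
  define cp where "cp = real_cond_exp M G Xp"
  define cm where "cm = real_cond_exp M G Xm"
  have cpm[measurable]: "cp \<in> borel_measurable G" "cm \<in> borel_measurable G" unfolding cp_def cm_def by auto
  have cpmM[measurable]: "cp \<in> borel_measurable M" "cm \<in> borel_measurable M" using gM[OF cpm(1)] gM[OF cpm(2)] by auto
  have Ki: "integrable M (\<lambda>\<omega>. K)" by simp
  have cK: "AE \<omega> in M. real_cond_exp M G (\<lambda>\<omega>. K) \<omega> = K" by (rule real_cond_exp_F_meas) auto
  have cpb: "AE \<omega> in M. 0 \<le> cp \<omega> \<and> cp \<omega> \<le> K"
  proof -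
    have "AE \<omega> in M. 0 \<le> cp \<omega>" unfolding cp_def by (rule real_cond_exp_pos) (use Xpb in auto)
    moreover have "AE \<omega> in M. cp \<omega> \<le> real_cond_exp M G (\<lambda>\<omega>. K) \<omega>" unfolding cp_def
      by (rule real_cond_exp_mono[OF _ Xpi(1) Ki]) (use Xpb in auto)
    ultimately show ?thesis using cK by eventually_elim auto
  qed
  have cmb: "AE \<omega> in M. 0 \<le> cm \<omega> \<and> cm \<omega> \<le> K"
  proof -
    have "AE \<omega> in M. 0 \<le> cm \<omega>" unfolding cm_def by (rule real_cond_exp_pos) (use Xpb in auto)
    moreover have "AE \<omega> in M. cm \<omega> \<le> real_cond_exp M G (\<lambda>\<omega>. K) \<omega>" unfolding cm_def
      by (rule real_cond_exp_mono[OF _ Xpi(2) Ki]) (use Xpb in auto)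
    ultimately show ?thesis using cK by eventually_elim auto
  qed
  define p where "p = (\<lambda>\<omega>. max 0 (min K (cp \<omega>)))"
  define q where "q = (\<lambda>\<omega>. max 0 (min K (cm \<omega>)))"
  have pq[measurable]: "p \<in> borel_measurable G" "q \<in> borel_measurable G" unfolding p_def q_def by measurable
  have pqH[measurable]: "p \<in> borel_measurable H" "q \<in> borel_measurable H" using gH[OF pq(1)] gH[OF pq(2)] by auto
  have pqM[measurable]: "p \<in> borel_measurable M" "q \<in> borel_measurable M" using gM[OF pq(1)] gM[OF pq(2)] by auto
  have pe: "AE \<omega> in M. p \<omega> = cp \<omega>" using cpb unfolding p_def by eventually_elim auto
  have qe: "AE \<omega> in M. q \<omega> = cm \<omega>" using cmb unfolding q_def by eventually_elim auto
  have pqb: "0 \<le> p \<omega>" "p \<omega> \<le> max 0 K" "0 \<le> q \<omega>" "q \<omega> \<le> max 0 K" for \<omega> unfolding p_def q_def by auto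
  define Z' where "Z' = (\<lambda>\<omega>. if 0 < X \<omega> then q \<omega> else if X \<omega> < 0 then p \<omega> else 1)"
  have Z'H[measurable]: "Z' \<in> borel_measurable H" unfolding Z'_def by measurable
  have Z'M[measurable]: "Z' \<in> borel_measurable M" by (rule hM[OF Z'H])
  have Z'b: "0 \<le> Z' \<omega>" "Z' \<omega> \<le> max 1 K" for \<omega> unfolding Z'_def using pqb[of \<omega>] by auto
  have Z'i: "integrable M Z'" using Z'b by (intro bint[of _ "max 1 K"]) auto
  define N where "N = real_cond_exp M G Z'"
  have NG[measurable]: "N \<in> borel_measurable G" unfolding N_def by auto
  have NH[measurable]: "N \<in> borel_measurable H" by (rule gH[OF NG])
  have NM[measurable]: "N \<in> borel_measurable M" by (rule gM[OF NG])
  have decomp: "Z' \<omega> * Y1 \<omega> = Y0 \<omega> * Z' \<omega> + (q \<omega> * Xp \<omega> - p \<omega> * Xm \<omega>)" for \<omega>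
    unfolding Z'_def Xp_def Xm_def X_def by (auto simp: algebra_simps)
  have i1: "integrable M (\<lambda>\<omega>. Y0 \<omega> * Z' \<omega>)"
    by (rule bint[of _ "K * max 1 K"]) (use b0 Z'b K0 in \<open>auto simp: abs_mult intro!: mult_mono\<close>)
  have i2: "integrable M (\<lambda>\<omega>. q \<omega> * Xp \<omega>)" "integrable M (\<lambda>\<omega>. p \<omega> * Xm \<omega>)"
    by (rule bint[of _ "max 0 K * K"], simp, use pqb Xpb K0 in \<open>auto simp: abs_mult intro!: mult_mono\<close>)+
  have i3: "integrable M (\<lambda>\<omega>. q \<omega> * Xp \<omega> - p \<omega> * Xm \<omega>)" using i2 by auto
  have e1: "AE \<omega> in M. real_cond_exp M G (\<lambda>\<omega>. Y0 \<omega> * Z' \<omega>) \<omega> = Y0 \<omega> * N \<omega>"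
    unfolding N_def by (rule real_cond_exp_mult) (auto simp: i1)
  have e2: "AE \<omega> in M. real_cond_exp M G (\<lambda>\<omega>. q \<omega> * Xp \<omega>) \<omega> = q \<omega> * cp \<omega>"
    unfolding cp_def by (rule real_cond_exp_mult) (auto simp: i2)
  have e3: "AE \<omega> in M. real_cond_exp M G (\<lambda>\<omega>. p \<omega> * Xm \<omega>) \<omega> = p \<omega> * cm \<omega>"
    unfolding cm_def by (rule real_cond_exp_mult) (auto simp: i2)
  have e4: "AE \<omega> in M. real_cond_exp M G (\<lambda>\<omega>. q \<omega> * Xp \<omega> - p \<omega> * Xm \<omega>) \<omega> = real_cond_exp M G (\<lambda>\<omega>. q \<omega> * Xp \<omega>) \<omega> - real_cond_exp M G (\<lambda>\<omega>. p \<omega> * Xm \<omega>) \<omega>"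
    by (rule real_cond_exp_diff[OF i2])
  have e5: "AE \<omega> in M. real_cond_exp M G (\<lambda>\<omega>. Y0 \<omega> * Z' \<omega> + (q \<omega> * Xp \<omega> - p \<omega> * Xm \<omega>)) \<omega> = real_cond_exp M G (\<lambda>\<omega>. Y0 \<omega> * Z' \<omega>) \<omega> + real_cond_exp M G (\<lambda>\<omega>. q \<omega> * Xp \<omega> - p \<omega> * Xm \<omega>) \<omega>"
    by (rule real_cond_exp_add[OF i1 i3])
  have EN: "AE \<omega> in M. real_cond_exp M G (\<lambda>\<omega>. Z' \<omega> * Y1 \<omega>) \<omega> = N \<omega> * Y0 \<omega>"
    using e1 e2 e3 e4 e5 pe qe unfolding decomp by eventually_elim (simp add: algebra_simps)
  have posq: "AE \<omega> in M. 0 < X \<omega> \<longrightarrow> 0 < q \<omega>"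
  proof -
    define B where "B = {\<omega>\<in>space M. q \<omega> \<le> 0}"
    have B: "B \<in> sets G" unfolding B_def using pq by (subst spG[symmetric]) measurable
    have BM: "B \<in> sets M" using B subG unfolding subalgebra_def by auto
    have indG: "indicator B \<in> borel_measurable G" using B by simp
    have "(\<integral>\<omega>. indicator B \<omega> * Xm \<omega> \<partial>M) = (\<integral>\<omega>. indicator B \<omega> * cm \<omega> \<partial>M)"
      unfolding cm_def by (rule real_cond_exp_intg(2)[symmetric]) (use integrable_mult_indicator[OF BM Xpi(2)] borel_measurable_indicator[OF B] in auto)
    also have "\<dots> = (\<integral>\<omega>. 0 \<partial>M)"
    proof (rule integral_cong_AE)
      show "(\<lambda>\<omega>. indicator B \<omega> * cm \<omega>) \<in> borel_measurable M" using BM by measurable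
      show "AE \<omega> in M. indicator B \<omega> * cm \<omega> = 0" using qe cmb by eventually_elim (auto simp: B_def indicator_def)
    qed simp
    finally have "(\<integral>\<omega>. indicator B \<omega> * Xm \<omega> \<partial>M) = 0" by simp
    moreover have "integrable M (\<lambda>\<omega>. indicator B \<omega> * Xm \<omega>)" using integrable_mult_indicator[OF BM Xpi(2)] by simp
    moreover have "AE \<omega> in M. 0 \<le> indicator B \<omega> * Xm \<omega>" using Xpb by (intro AE_I2) auto
    ultimately have "AE \<omega> in M. indicator B \<omega> * Xm \<omega> = 0"
      using integral_nonneg_eq_0_iff_AE by blast
    then have "AE \<omega> in M. \<omega> \<in> B \<longrightarrow> Y0 \<omega> \<le> Y1 \<omega>" by eventually_elim (auto simp: Xm_def X_def)
    from na1[OF B this] AE_space show ?thesis unfolding B_def X_def by eventually_elim auto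
  qed
  have posp: "AE \<omega> in M. X \<omega> < 0 \<longrightarrow> 0 < p \<omega>"
  proof -
    define B where "B = {\<omega>\<in>space M. p \<omega> \<le> 0}"
    have B: "B \<in> sets G" unfolding B_def using pq by (subst spG[symmetric]) measurable
    have BM: "B \<in> sets M" using B subG unfolding subalgebra_def by auto
    have "(\<integral>\<omega>. indicator B \<omega> * Xp \<omega> \<partial>M) = (\<integral>\<omega>. indicator B \<omega> * cp \<omega> \<partial>M)"
      unfolding cp_def by (rule real_cond_exp_intg(2)[symmetric]) (use integrable_mult_indicator[OF BM Xpi(1)] borel_measurable_indicator[OF B] in auto)
    also have "\<dots> = (\<integral>\<omega>. 0 \<partial>M)"
    proof (rule integral_cong_AE)
      show "(\<lambda>\<omega>. indicator B \<omega> * cp \<omega>) \<in> borel_measurable M" using BM by measurable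
      show "AE \<omega> in M. indicator B \<omega> * cp \<omega> = 0" using pe cpb by eventually_elim (auto simp: B_def indicator_def)
    qed simp
    finally have "(\<integral>\<omega>. indicator B \<omega> * Xp \<omega> \<partial>M) = 0" by simp
    moreover have "integrable M (\<lambda>\<omega>. indicator B \<omega> * Xp \<omega>)" using integrable_mult_indicator[OF BM Xpi(1)] by simp
    moreover have "AE \<omega> in M. 0 \<le> indicator B \<omega> * Xp \<omega>" using Xpb by (intro AE_I2) auto
    ultimately have "AE \<omega> in M. indicator B \<omega> * Xp \<omega> = 0"
      using integral_nonneg_eq_0_iff_AE by blast
    then have "AE \<omega> in M. \<omega> \<in> B \<longrightarrow> Y1 \<omega> \<le> Y0 \<omega>" by eventually_elim (auto simp: Xp_def X_def)
    from na2[OF B this] AE_space show ?thesis unfolding B_def X_def by eventually_elim auto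
  qed
  have Z'pos: "AE \<omega> in M. 0 < Z' \<omega>" using posp posq unfolding Z'_def by eventually_elim auto
  have Npos: "AE \<omega> in M. 0 < N \<omega>"
  proof -
    define B where "B = {\<omega>\<in>space M. N \<omega> \<le> 0}"
    have B: "B \<in> sets G" unfolding B_def using NG by (subst spG[symmetric]) measurable
    have BM: "B \<in> sets M" using B subG unfolding subalgebra_def by auto
    have iZ: "integrable M (\<lambda>\<omega>. indicator B \<omega> * Z' \<omega>)" using integrable_mult_indicator[OF BM Z'i] by simp
    have "(\<integral>\<omega>. indicator B \<omega> * Z' \<omega> \<partial>M) = (\<integral>\<omega>. indicator B \<omega> * N \<omega> \<partial>M)"
      unfolding N_def by (rule real_cond_exp_intg(2)[symmetric]) (use iZ borel_measurable_indicator[OF B] in auto)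
    also have "\<dots> \<le> (\<integral>\<omega>. 0 \<partial>M)"
    proof (rule integral_mono)
      show "integrable M (\<lambda>\<omega>. indicator B \<omega> * N \<omega>)" unfolding N_def
        by (rule real_cond_exp_intg(1)) (use iZ borel_measurable_indicator[OF B] in auto)
    qed (auto simp: B_def indicator_def)
    finally have "(\<integral>\<omega>. indicator B \<omega> * Z' \<omega> \<partial>M) \<le> 0" by simp
    moreover have "0 \<le> (\<integral>\<omega>. indicator B \<omega> * Z' \<omega> \<partial>M)" using Z'b by (intro integral_nonneg_AE AE_I2) auto
    ultimately have "(\<integral>\<omega>. indicator B \<omega> * Z' \<omega> \<partial>M) = 0" by simp
    moreover have "AE \<omega> in M. 0 \<le> indicator B \<omega> * Z' \<omega>" using Z'b by (intro AE_I2) auto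
    ultimately have "AE \<omega> in M. indicator B \<omega> * Z' \<omega> = 0"
      using integral_nonneg_eq_0_iff_AE[OF iZ] by blast
    from this Z'pos AE_space show ?thesis unfolding B_def by eventually_elim (auto simp: indicator_def split: if_splits)
  qed
  define Z where "Z = (\<lambda>\<omega>. if 0 < N \<omega> then Z' \<omega> / N \<omega> else 1)"
  have ZH: "Z \<in> borel_measurable H" unfolding Z_def by measurable
  have Z0: "\<forall>\<omega>. 0 \<le> Z \<omega>" unfolding Z_def using Z'b by auto
  have Zpos: "AE \<omega> in M. 0 < Z \<omega>" using Z'pos unfolding Z_def by eventually_elim auto
  have int1: "(\<integral>\<^sup>+\<omega>. g \<omega> * ennreal (Z \<omega>) \<partial>M) = (\<integral>\<^sup>+\<omega>. g \<omega> \<partial>M)" if g[measurable]: "g \<in> borel_measurable G" for g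
  proof -
    have gi: "(\<lambda>\<omega>. g \<omega> * ennreal (1 / N \<omega>)) \<in> borel_measurable G" by measurable
    have "(\<integral>\<^sup>+\<omega>. g \<omega> * ennreal (Z \<omega>) \<partial>M) = (\<integral>\<^sup>+\<omega>. g \<omega> * ennreal (1 / N \<omega>) * ennreal (Z' \<omega>) \<partial>M)"
      by (rule nn_integral_cong_AE) (use Npos in \<open>eventually_elim, use Z'b in \<open>simp add: Z_def emul\<close>\<close>)
    also have "\<dots> = (\<integral>\<^sup>+\<omega>. g \<omega> * ennreal (1 / N \<omega>) * ennreal (real_cond_exp M G Z' \<omega>) \<partial>M)"
      by (rule KEY[OF sfs Z'M Z'i _ gi]) (use Z'b in auto)
    also have "\<dots> = (\<integral>\<^sup>+\<omega>. g \<omega> \<partial>M)"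
      by (rule nn_integral_cong_AE) (use Npos in \<open>eventually_elim, simp add: emul N_def[symmetric]\<close>)
    finally show ?thesis .
  qed
  have int2: "(\<integral>\<^sup>+\<omega>. g \<omega> * ennreal (Z \<omega> * Y1 \<omega>) \<partial>M) = (\<integral>\<^sup>+\<omega>. g \<omega> * ennreal (Y0 \<omega>) \<partial>M)" if g[measurable]: "g \<in> borel_measurable G" for g
  proof -
    have gi: "(\<lambda>\<omega>. g \<omega> * ennreal (1 / N \<omega>)) \<in> borel_measurable G" by measurable
    have ZY: "integrable M (\<lambda>\<omega>. Z' \<omega> * Y1 \<omega>)"
      by (rule bint[of _ "max 1 K * K"]) (use b1 Z'b K0 in \<open>auto simp: abs_mult intro!: mult_mono\<close>)
    have "(\<integral>\<^sup>+\<omega>. g \<omega> * ennreal (Z \<omega> * Y1 \<omega>) \<partial>M) = (\<integral>\<^sup>+\<omega>. g \<omega> * ennreal (1 / N \<omega>) * ennreal (Z' \<omega> * Y1 \<omega>) \<partial>M)"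
      by (rule nn_integral_cong_AE) (use Npos AE_space in \<open>eventually_elim, use Z'b b1 in \<open>simp add: Z_def emul mult_nonneg_nonneg\<close>\<close>)
    also have "\<dots> = (\<integral>\<^sup>+\<omega>. g \<omega> * ennreal (1 / N \<omega>) * ennreal (real_cond_exp M G (\<lambda>\<omega>. Z' \<omega> * Y1 \<omega>) \<omega>) \<partial>M)"
      by (rule KEY[OF sfs _ ZY _ gi]) (use Z'b b1 in \<open>auto intro!: AE_I2 mult_nonneg_nonneg\<close>)
    also have "\<dots> = (\<integral>\<^sup>+\<omega>. g \<omega> * ennreal (Y0 \<omega>) \<partial>M)"
      by (rule nn_integral_cong_AE) (use Npos EN AE_space in \<open>eventually_elim, use b0 in \<open>simp add: emul\<close>\<close>)
    finally show ?thesis .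
  qed
  show ?thesis using ZH Z0 Zpos int1 int2 by blast
qed

lemma sum_change1: fixes f f' :: "nat \<Rightarrow> real"
  assumes "finite S" "t \<in> S" "\<And>r. r \<in> S \<Longrightarrow> r \<noteq> t \<Longrightarrow> f' r = f r"
  shows "sum f' S = sum f S + (f' t - f t)"
proof -
  have "sum f' S = f' t + sum f' (S - {t})" using assms by (simp add: sum.remove)
  also have "sum f' (S - {t}) = sum f (S - {t})" using assms by (intro sum.cong) auto
  also have "sum f S = f t + sum f (S - {t})" using assms by (simp add: sum.remove)
  ultimately show ?thesis by simp
qed

lemma sum_change0: fixes f f' :: "nat \<Rightarrow> real"
  assumes "\<And>r. r \<in> S \<Longrightarrow> f' r = f r"
  shows "sum f' S = sum f S"
  using assms by (intro sum.cong) auto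

locale eqm =
  fixes M :: "'a measure" and F :: "nat \<Rightarrow> 'a measure" and T :: nat
    and I :: "'i set"
    and E :: "'i \<Rightarrow> nat \<Rightarrow> 'a \<Rightarrow> real"
    and C :: "'i \<Rightarrow> nat \<Rightarrow> real \<Rightarrow> 'a \<Rightarrow> real"
    and \<pi> :: real and \<gamma> :: "'i \<Rightarrow> 'a \<Rightarrow> real"
    and U :: "'i \<Rightarrow> real \<Rightarrow> real"
    and A :: "nat \<Rightarrow> 'a \<Rightarrow> real"
    and \<theta>s :: "'i \<Rightarrow> nat \<Rightarrow> 'a \<Rightarrow> real" and \<xi>s :: "'i \<Rightarrow> nat \<Rightarrow> 'a \<Rightarrow> real"
  assumes P: "prob_space M"
    and filt: "filtration_on M F T"
    and F0_trivial: "sets (F 0) = {{}, space M}"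
    and I_fin: "finite I"
    and E_adapted: "\<And>i t. i \<in> I \<Longrightarrow> t < T \<Longrightarrow> E i t \<in> borel_measurable (F t)"
    and E_nonneg: "\<And>i t \<omega>. i \<in> I \<Longrightarrow> t < T \<Longrightarrow> \<omega> \<in> space M \<Longrightarrow> 0 \<le> E i t \<omega>"
    and C_meas: "\<And>i t. i \<in> I \<Longrightarrow> t < T \<Longrightarrow>
        (\<lambda>(x, \<omega>). C i t x \<omega>) \<in> borel_measurable (restrict_space borel {0::real..} \<Otimes>\<^sub>M F t)"
    and C_strict_convex: "\<And>i t \<omega>. i \<in> I \<Longrightarrow> t < T \<Longrightarrow> \<omega> \<in> space M \<Longrightarrow>
        strict_convex_on {0..} (\<lambda>x. C i t x \<omega>)"
    and C_cont: "\<And>i t \<omega>. i \<in> I \<Longrightarrow> t < T \<Longrightarrow> \<omega> \<in> space M \<Longrightarrow>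
        continuous_on {0..} (\<lambda>x. C i t x \<omega>)"
    and C_zero: "\<And>i t \<omega>. i \<in> I \<Longrightarrow> t < T \<Longrightarrow> \<omega> \<in> space M \<Longrightarrow> C i t 0 \<omega> = 0"
    and pi_pos: "\<pi> > 0"
    and \<gamma>_meas: "\<And>i. i \<in> I \<Longrightarrow> \<gamma> i \<in> borel_measurable (F T)"
    and \<gamma>_no_atoms: "cond_distr_no_atoms M (F (T - 1)) (\<lambda>\<omega>. \<Sum>i\<in>I. \<gamma> i \<omega>)"
    and U_cont: "\<And>i. i \<in> I \<Longrightarrow> continuous_on UNIV (U i)"
    and U_mono: "\<And>i. i \<in> I \<Longrightarrow> strict_mono (U i)"
    and U_concave: "\<And>i. i \<in> I \<Longrightarrow> concave_on UNIV (U i)"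
    and A_adapted: "\<And>t. t \<le> T \<Longrightarrow> A t \<in> borel_measurable (F t)"
    and eq_adm: "\<And>i. i \<in> I \<Longrightarrow> admissible M F T (E i) (\<theta>s i) (\<xi>s i)"
    and eq_finite: "\<And>i. i \<in> I \<Longrightarrow>
        util_exists M (\<lambda>\<omega>. U i (wealth T \<pi> A (C i) (E i) (\<gamma> i) (\<theta>s i) (\<xi>s i) \<omega>)) \<and>
        \<bar>util_val M (\<lambda>\<omega>. U i (wealth T \<pi> A (C i) (E i) (\<gamma> i) (\<theta>s i) (\<xi>s i) \<omega>))\<bar> \<noteq> \<infinity>"
    and eq_clear: "\<And>t \<omega>. t \<le> T \<Longrightarrow> \<omega> \<in> space M \<Longrightarrow> (\<Sum>i\<in>I. \<theta>s i t \<omega>) = 0"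
    and eq_opt: "\<And>i \<theta> \<xi>. i \<in> I \<Longrightarrow> admissible M F T (E i) \<theta> \<xi> \<Longrightarrow>
        util_exists M (\<lambda>\<omega>. U i (wealth T \<pi> A (C i) (E i) (\<gamma> i) \<theta> \<xi> \<omega>)) \<Longrightarrow>
        util_val M (\<lambda>\<omega>. U i (wealth T \<pi> A (C i) (E i) (\<gamma> i) \<theta> \<xi> \<omega>))
          \<le> util_val M (\<lambda>\<omega>. U i (wealth T \<pi> A (C i) (E i) (\<gamma> i) (\<theta>s i) (\<xi>s i) \<omega>))"

begin

lemma sub: "t \<le> T \<Longrightarrow> subalgebra M (F t)"
  using filt unfolding filtration_on_def by auto

lemma space_F[simp]: "t \<le> T \<Longrightarrow> space (F t) = space M"
  using sub unfolding subalgebra_def by auto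

lemma sets_F: "t \<le> T \<Longrightarrow> sets (F t) \<subseteq> sets M"
  using sub unfolding subalgebra_def by auto

lemma mono_F: "s \<le> t \<Longrightarrow> t \<le> T \<Longrightarrow> sets (F s) \<subseteq> sets (F t)"
  using filt unfolding filtration_on_def by auto

lemma meas_up: "f \<in> borel_measurable (F s) \<Longrightarrow> s \<le> t \<Longrightarrow> t \<le> T \<Longrightarrow> f \<in> borel_measurable (F t)"
proof -
  assume f: "f \<in> borel_measurable (F s)" and st: "s \<le> t" "t \<le> T"
  have "subalgebra (F t) (F s)" unfolding subalgebra_def using mono_F[OF st] st by simp
  then show ?thesis using measurable_from_subalg f by blast
qed

lemma meas_M: "f \<in> borel_measurable (F t) \<Longrightarrow> t \<le> T \<Longrightarrow> f \<in> borel_measurable M"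
  using measurable_from_subalg sub by blast

lemma C_comp: assumes i: "i \<in> I" and t: "t < T" and f: "f \<in> borel_measurable (F t)"
  and nn: "\<And>\<omega>. \<omega> \<in> space M \<Longrightarrow> 0 \<le> f \<omega>"
  shows "(\<lambda>\<omega>. C i t (f \<omega>) \<omega>) \<in> borel_measurable (F t)"
proof -
  have f': "f \<in> measurable (F t) (restrict_space borel {0::real..})"
    by (rule measurable_restrict_space2) (use f nn t in auto)
  have "(\<lambda>\<omega>. (f \<omega>, \<omega>)) \<in> measurable (F t) (restrict_space borel {0::real..} \<Otimes>\<^sub>M F t)"
    using f' by (intro measurable_Pair) auto
  from measurable_compose[OF this C_meas[OF i t]] show ?thesis by simp
qed


abbreviation W where "W i \<theta> \<xi> \<equiv> wealth T \<pi> A (C i) (E i) (\<gamma> i) \<theta> \<xi>"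

lemma A_M: "t \<le> T \<Longrightarrow> A t \<in> borel_measurable M"
  using meas_M A_adapted by blast

lemma wealth_meas: assumes i: "i \<in> I" and adm: "admissible M F T (E i) \<theta> \<xi>"
  shows "W i \<theta> \<xi> \<in> borel_measurable M"
proof -
  have th: "\<And>t. t \<le> T \<Longrightarrow> \<theta> t \<in> borel_measurable M"
    using adm meas_M unfolding admissible_def by blast
  have xi: "\<And>t. t < T \<Longrightarrow> \<xi> t \<in> borel_measurable M"
    using adm meas_M unfolding admissible_def by (meson less_imp_le)
  have Cm: "\<And>t. t < T \<Longrightarrow> (\<lambda>\<omega>. C i t (\<xi> t \<omega>) \<omega>) \<in> borel_measurable M"
  proof -
    fix t assume t: "t < T"
    have "(\<lambda>\<omega>. C i t (\<xi> t \<omega>) \<omega>) \<in> borel_measurable (F t)"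
      using adm t by (intro C_comp[OF i t]) (auto simp: admissible_def)
    then show "(\<lambda>\<omega>. C i t (\<xi> t \<omega>) \<omega>) \<in> borel_measurable M" using meas_M t less_imp_le by blast
  qed
  have Em: "\<And>t. t < T \<Longrightarrow> E i t \<in> borel_measurable M"
    using E_adapted[OF i] meas_M by (meson less_imp_le)
  have gm: "\<gamma> i \<in> borel_measurable M" using \<gamma>_meas[OF i] meas_M by blast
  show ?thesis unfolding wealth_def
    by (intro borel_measurable_diff borel_measurable_add borel_measurable_times borel_measurable_sum
        borel_measurable_max borel_measurable_uminus borel_measurable_const th xi Cm Em gm A_M) auto
qed

lemma P_fin: "finite_measure M" using P prob_space_def by blast

lemma util_val_integral: assumes "integrable M f" shows "util_val M f = ereal (integral\<^sup>L M f)"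
proof -
  obtain r q where "0 \<le> r" "0 \<le> q" "(\<integral>\<^sup>+x. ennreal (f x)\<partial>M) = ennreal r"
    "(\<integral>\<^sup>+x. ennreal (-f x)\<partial>M) = ennreal q" "integral\<^sup>L M f = r - q"
    using integrableE[OF assms] by metis
  then show ?thesis unfolding util_val_def by simp
qed

lemma util_integrable: assumes "util_exists M f" "\<bar>util_val M f\<bar> \<noteq> \<infinity>"
  shows "integrable M f"
proof -
  have m: "f \<in> borel_measurable M" and n: "(\<integral>\<^sup>+\<omega>. ennreal (- f \<omega>) \<partial>M) < \<infinity>"
    using assms(1) unfolding util_exists_def by auto
  have "(\<integral>\<^sup>+\<omega>. ennreal (f \<omega>) \<partial>M) \<noteq> \<infinity>"
  proof
    assume "(\<integral>\<^sup>+\<omega>. ennreal (f \<omega>) \<partial>M) = \<infinity>"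
    moreover obtain q where "(\<integral>\<^sup>+\<omega>. ennreal (- f \<omega>) \<partial>M) = ennreal q" "0 \<le> q"
      using n by (cases "(\<integral>\<^sup>+\<omega>. ennreal (- f \<omega>) \<partial>M)") auto
    ultimately have "util_val M f = \<infinity>" unfolding util_val_def by simp
    then show False using assms(2) by simp
  qed
  then show ?thesis using m n unfolding real_integrable_def by auto
qed

lemma improve: assumes i: "i \<in> I" and adm: "admissible M F T (E i) \<theta> \<xi>"
  and ge: "AE \<omega> in M. W i (\<theta>s i) (\<xi>s i) \<omega> \<le> W i \<theta> \<xi> \<omega>"
  shows "AE \<omega> in M. W i \<theta> \<xi> \<omega> = W i (\<theta>s i) (\<xi>s i) \<omega>"
proof (rule ccontr)
  assume nae: "\<not> (AE \<omega> in M. W i \<theta> \<xi> \<omega> = W i (\<theta>s i) (\<xi>s i) \<omega>)"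
  interpret finite_measure M by (rule P_fin)
  define w where "w = W i (\<theta>s i) (\<xi>s i)"
  define w' where "w' = W i \<theta> \<xi>"
  have wm: "w \<in> borel_measurable M" unfolding w_def by (rule wealth_meas[OF i eq_adm[OF i]])
  have wm': "w' \<in> borel_measurable M" unfolding w'_def by (rule wealth_meas[OF i adm])
  have Ub: "U i \<in> borel_measurable borel" using U_cont[OF i] borel_measurable_continuous_onI by blast
  have fm: "(\<lambda>\<omega>. U i (w \<omega>)) \<in> borel_measurable M" using measurable_compose[OF wm Ub] by simp
  have fm': "(\<lambda>\<omega>. U i (w' \<omega>)) \<in> borel_measurable M" using measurable_compose[OF wm' Ub] by simp
  have smU: "strict_mono (U i)" by (rule U_mono[OF i])
  have ge': "AE \<omega> in M. U i (w \<omega>) \<le> U i (w' \<omega>)"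
    using ge unfolding w_def w'_def by eventually_elim (simp add: strict_mono_less_eq[OF smU])
  have fin: "util_exists M (\<lambda>\<omega>. U i (w \<omega>))" "\<bar>util_val M (\<lambda>\<omega>. U i (w \<omega>))\<bar> \<noteq> \<infinity>"
    using eq_finite[OF i] unfolding w_def by auto
  have int: "integrable M (\<lambda>\<omega>. U i (w \<omega>))" by (rule util_integrable[OF fin])
  have "(\<integral>\<^sup>+\<omega>. ennreal (- U i (w' \<omega>)) \<partial>M) \<le> (\<integral>\<^sup>+\<omega>. ennreal (- U i (w \<omega>)) \<partial>M)"
    by (intro nn_integral_mono_AE) (use ge' in \<open>eventually_elim, auto intro: ennreal_leI\<close>)
  also have "\<dots> < \<infinity>" using fin(1) unfolding util_exists_def by auto
  finally have ex': "util_exists M (\<lambda>\<omega>. U i (w' \<omega>))" unfolding util_exists_def using fm' by auto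
  have le: "util_val M (\<lambda>\<omega>. U i (w' \<omega>)) \<le> util_val M (\<lambda>\<omega>. U i (w \<omega>))"
    using eq_opt[OF i adm] ex' unfolding w_def w'_def by auto
  define S where "S = {\<omega>\<in>space M. w' \<omega> \<noteq> w \<omega>}"
  have S: "S \<in> sets M" unfolding S_def using wm wm' by measurable
  have Sne: "emeasure M S \<noteq> 0"
    using nae AE_iff_measurable[OF S, of "\<lambda>\<omega>. w' \<omega> = w \<omega>"] unfolding S_def w_def w'_def by auto
  show False
  proof (cases "(\<integral>\<^sup>+\<omega>. ennreal (U i (w' \<omega>)) \<partial>M) = \<infinity>")
    case True
    obtain q where "(\<integral>\<^sup>+\<omega>. ennreal (- U i (w' \<omega>)) \<partial>M) = ennreal q" "0 \<le> q"
      using ex' unfolding util_exists_def by (cases "(\<integral>\<^sup>+\<omega>. ennreal (- U i (w' \<omega>)) \<partial>M)") auto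
    then have "util_val M (\<lambda>\<omega>. U i (w' \<omega>)) = \<infinity>" using True unfolding util_val_def by simp
    then show False using le fin(2) by auto
  next
    case False
    then have int': "integrable M (\<lambda>\<omega>. U i (w' \<omega>))"
      using ex' fm' unfolding util_exists_def real_integrable_def by auto
    have "integral\<^sup>L M (\<lambda>\<omega>. U i (w \<omega>)) < integral\<^sup>L M (\<lambda>\<omega>. U i (w' \<omega>))"
    proof (rule integral_less_AE[OF int int' Sne S])
      show "AE x in M. x \<in> S \<longrightarrow> U i (w x) \<noteq> U i (w' x)"
        unfolding S_def using strict_mono_eq[OF smU] by auto
    qed (rule ge')
    then show False using le unfolding util_val_integral[OF int] util_val_integral[OF int'] by simp
  qed
qed


definition u where "u i \<omega> = (\<Sum>t<T. E i t \<omega> - \<xi>s i t \<omega> - \<theta>s i t \<omega>) - \<gamma> i \<omega> - \<theta>s i T \<omega>"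

lemma adm_th: "i \<in> I \<Longrightarrow> t \<le> T \<Longrightarrow> \<theta>s i t \<in> borel_measurable (F t)"
  using eq_adm unfolding admissible_def by blast
lemma adm_xi: "i \<in> I \<Longrightarrow> t < T \<Longrightarrow> \<xi>s i t \<in> borel_measurable (F t)"
  using eq_adm unfolding admissible_def by blast
lemma adm_xi_bd: "i \<in> I \<Longrightarrow> t < T \<Longrightarrow> \<omega> \<in> space M \<Longrightarrow> 0 \<le> \<xi>s i t \<omega> \<and> \<xi>s i t \<omega> \<le> E i t \<omega>"
  using eq_adm unfolding admissible_def by blast

lemma dev_T:
  assumes i: "i \<in> I" and H: "H \<in> borel_measurable (F T)"
    and nn: "AE \<omega> in M. 0 \<le> - H \<omega> * A T \<omega> - \<pi> * (max 0 (u i \<omega> - H \<omega>) - max 0 (u i \<omega>))"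
  shows "AE \<omega> in M. - H \<omega> * A T \<omega> - \<pi> * (max 0 (u i \<omega> - H \<omega>) - max 0 (u i \<omega>)) = 0"
proof -
  define th where "th = (\<lambda>r \<omega>. \<theta>s i r \<omega> + (if r = T then H \<omega> else 0))"
  have adm: "admissible M F T (E i) th (\<xi>s i)"
    unfolding admissible_def
  proof (intro conjI allI impI)
    fix t assume t: "t \<le> T"
    show "th t \<in> borel_measurable (F t)"
    proof (cases "t = T")
      case True then show ?thesis unfolding th_def using adm_th[OF i t] H by simp
    next
      case False then show ?thesis unfolding th_def using adm_th[OF i t] by simp
    qed
  qed (use eq_adm[OF i] in \<open>auto simp: admissible_def\<close>)
  have eq: "W i th (\<xi>s i) \<omega> = W i (\<theta>s i) (\<xi>s i) \<omega> + (- H \<omega> * A T \<omega> - \<pi> * (max 0 (u i \<omega> - H \<omega>) - max 0 (u i \<omega>)))" for \<omega>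
  proof -
    have s1: "(\<Sum>t<T. th t \<omega> * A t \<omega> + C i t (\<xi>s i t \<omega>) \<omega>) = (\<Sum>t<T. \<theta>s i t \<omega> * A t \<omega> + C i t (\<xi>s i t \<omega>) \<omega>)"
      by (rule sum_change0) (simp add: th_def)
    have s2: "(\<Sum>t<T. E i t \<omega> - \<xi>s i t \<omega> - th t \<omega>) = (\<Sum>t<T. E i t \<omega> - \<xi>s i t \<omega> - \<theta>s i t \<omega>)"
      by (rule sum_change0) (simp add: th_def)
    show ?thesis unfolding wealth_def s1 s2 u_def by (simp add: th_def algebra_simps)
  qed
  have "AE \<omega> in M. W i th (\<xi>s i) \<omega> = W i (\<theta>s i) (\<xi>s i) \<omega>"
    by (rule improve[OF i adm]) (use nn in \<open>eventually_elim, simp add: eq\<close>)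
  then show ?thesis by eventually_elim (simp add: eq)
qed

lemma dev_pair:
  assumes i: "i \<in> I" and ts: "t < s" "s \<le> T" and H: "H \<in> borel_measurable (F t)"
    and nn: "AE \<omega> in M. 0 \<le> H \<omega> * (A s \<omega> - A t \<omega>)"
  shows "AE \<omega> in M. H \<omega> * (A s \<omega> - A t \<omega>) = 0"
proof -
  define th where "th = (\<lambda>r \<omega>. \<theta>s i r \<omega> + (if r = t then H \<omega> else 0) - (if r = s then H \<omega> else 0))"
  have Hs: "H \<in> borel_measurable (F s)" using meas_up[OF H] ts by simp
  have adm: "admissible M F T (E i) th (\<xi>s i)"
    unfolding admissible_def
  proof (intro conjI allI impI)
    fix r assume r: "r \<le> T"
    show "th r \<in> borel_measurable (F r)"
      unfolding th_def using adm_th[OF i r] H Hs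
      by (cases "r = t"; cases "r = s") auto
  qed (use eq_adm[OF i] in \<open>auto simp: admissible_def\<close>)
  have eq: "W i th (\<xi>s i) \<omega> = W i (\<theta>s i) (\<xi>s i) \<omega> + H \<omega> * (A s \<omega> - A t \<omega>)" for \<omega>
  proof (cases "s = T")
    case True
    have s1: "(\<Sum>r<T. th r \<omega> * A r \<omega> + C i r (\<xi>s i r \<omega>) \<omega>) = (\<Sum>r<T. \<theta>s i r \<omega> * A r \<omega> + C i r (\<xi>s i r \<omega>) \<omega>) + H \<omega> * A t \<omega>"
      by (subst sum_change1[where t=t]) (use ts True in \<open>auto simp: th_def algebra_simps\<close>)
    have s2: "(\<Sum>r<T. E i r \<omega> - \<xi>s i r \<omega> - th r \<omega>) = (\<Sum>r<T. E i r \<omega> - \<xi>s i r \<omega> - \<theta>s i r \<omega>) - H \<omega>"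
      by (subst sum_change1[where t=t]) (use ts True in \<open>auto simp: th_def\<close>)
    show ?thesis unfolding wealth_def s1 s2 using ts True by (simp add: th_def algebra_simps)
  next
    case False
    then have sT: "s < T" using ts by simp
    have s1: "(\<Sum>r<T. th r \<omega> * A r \<omega> + C i r (\<xi>s i r \<omega>) \<omega>) = (\<Sum>r<T. \<theta>s i r \<omega> * A r \<omega> + C i r (\<xi>s i r \<omega>) \<omega>) + H \<omega> * A t \<omega> - H \<omega> * A s \<omega>"
    proof -
      have "(\<Sum>r<T. th r \<omega> * A r \<omega> + C i r (\<xi>s i r \<omega>) \<omega>) = (\<Sum>r<T. \<theta>s i r \<omega> * A r \<omega> + C i r (\<xi>s i r \<omega>) \<omega> + (if r = t then H \<omega> * A t \<omega> else 0) - (if r = s then H \<omega> * A s \<omega> else 0))"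
        by (intro sum.cong) (auto simp: th_def algebra_simps)
      also have "\<dots> = (\<Sum>r<T. \<theta>s i r \<omega> * A r \<omega> + C i r (\<xi>s i r \<omega>) \<omega>) + H \<omega> * A t \<omega> - H \<omega> * A s \<omega>"
        using ts sT by (simp add: sum.distrib sum_subtractf)
      finally show ?thesis .
    qed
    have s2: "(\<Sum>r<T. E i r \<omega> - \<xi>s i r \<omega> - th r \<omega>) = (\<Sum>r<T. E i r \<omega> - \<xi>s i r \<omega> - \<theta>s i r \<omega>)"
    proof -
      have "(\<Sum>r<T. E i r \<omega> - \<xi>s i r \<omega> - th r \<omega>) = (\<Sum>r<T. E i r \<omega> - \<xi>s i r \<omega> - \<theta>s i r \<omega> - (if r = t then H \<omega> else 0) + (if r = s then H \<omega> else 0))"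
        by (intro sum.cong) (auto simp: th_def algebra_simps)
      also have "\<dots> = (\<Sum>r<T. E i r \<omega> - \<xi>s i r \<omega> - \<theta>s i r \<omega>)"
        using ts sT by (simp add: sum.distrib sum_subtractf)
      finally show ?thesis .
    qed
    show ?thesis unfolding wealth_def s1 s2 using ts sT by (simp add: th_def algebra_simps)
  qed
  have "AE \<omega> in M. W i th (\<xi>s i) \<omega> = W i (\<theta>s i) (\<xi>s i) \<omega>"
    by (rule improve[OF i adm]) (use nn in \<open>eventually_elim, simp add: eq\<close>)
  then show ?thesis by eventually_elim (simp add: eq)
qed

lemma dev_xi:
  assumes i: "i \<in> I" and t: "t < T" and X: "X \<in> borel_measurable (F t)"
    and Xb: "\<And>\<omega>. \<omega> \<in> space M \<Longrightarrow> 0 \<le> X \<omega> \<and> X \<omega> \<le> E i t \<omega>"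
    and nn: "AE \<omega> in M. 0 \<le> (C i t (\<xi>s i t \<omega>) \<omega> - A t \<omega> * \<xi>s i t \<omega>) - (C i t (X \<omega>) \<omega> - A t \<omega> * X \<omega>)"
  shows "AE \<omega> in M. (C i t (\<xi>s i t \<omega>) \<omega> - A t \<omega> * \<xi>s i t \<omega>) - (C i t (X \<omega>) \<omega> - A t \<omega> * X \<omega>) = 0"
proof -
  define th where "th = (\<lambda>r \<omega>. \<theta>s i r \<omega> + (if r = t then \<xi>s i t \<omega> - X \<omega> else 0))"
  define xi where "xi = (\<lambda>r \<omega>. if r = t then X \<omega> else \<xi>s i r \<omega>)"
  have adm: "admissible M F T (E i) th xi"
    unfolding admissible_def
  proof (intro conjI allI impI ballI)
    fix r assume r: "r \<le> T"
    show "th r \<in> borel_measurable (F r)"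
      unfolding th_def using adm_th[OF i r] adm_xi[OF i t] X
      by (cases "r = t") auto
  next
    fix r assume r: "r < T"
    show "xi r \<in> borel_measurable (F r)" unfolding xi_def using adm_xi[OF i r] X by (cases "r = t") auto
    fix \<omega> assume "\<omega> \<in> space M"
    then show "0 \<le> xi r \<omega>" "xi r \<omega> \<le> E i r \<omega>" unfolding xi_def using adm_xi_bd[OF i r] Xb
      by (cases "r = t"; auto)+
  qed
  have eq: "W i th xi \<omega> = W i (\<theta>s i) (\<xi>s i) \<omega> + ((C i t (\<xi>s i t \<omega>) \<omega> - A t \<omega> * \<xi>s i t \<omega>) - (C i t (X \<omega>) \<omega> - A t \<omega> * X \<omega>))" for \<omega>
  proof -
    have s1: "(\<Sum>r<T. th r \<omega> * A r \<omega> + C i r (xi r \<omega>) \<omega>) = (\<Sum>r<T. \<theta>s i r \<omega> * A r \<omega> + C i r (\<xi>s i r \<omega>) \<omega>) + ((\<xi>s i t \<omega> - X \<omega>) * A t \<omega> + C i t (X \<omega>) \<omega> - C i t (\<xi>s i t \<omega>) \<omega>)"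
      by (subst sum_change1[where t=t]) (use t in \<open>auto simp: th_def xi_def algebra_simps\<close>)
    have s2: "(\<Sum>r<T. E i r \<omega> - xi r \<omega> - th r \<omega>) = (\<Sum>r<T. E i r \<omega> - \<xi>s i r \<omega> - \<theta>s i r \<omega>)"
      by (subst sum_change1[where t=t]) (use t in \<open>auto simp: th_def xi_def\<close>)
    show ?thesis unfolding wealth_def s1 s2 using t by (simp add: th_def algebra_simps)
  qed
  have "AE \<omega> in M. W i th xi \<omega> = W i (\<theta>s i) (\<xi>s i) \<omega>"
    by (rule improve[OF i adm]) (use nn in \<open>eventually_elim, simp add: eq\<close>)
  then show ?thesis by eventually_elim (simp add: eq)
qed


lemma u_meas: "i \<in> I \<Longrightarrow> u i \<in> borel_measurable (F T)"
proof -
  assume i: "i \<in> I"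
  have "\<And>t. t < T \<Longrightarrow> E i t \<in> borel_measurable (F T)" using E_adapted[OF i] meas_up by (meson less_imp_le order_refl)
  moreover have "\<And>t. t < T \<Longrightarrow> \<xi>s i t \<in> borel_measurable (F T)" using adm_xi[OF i] meas_up by (meson less_imp_le order_refl)
  moreover have "\<And>t. t \<le> T \<Longrightarrow> \<theta>s i t \<in> borel_measurable (F T)" using adm_th[OF i] meas_up by (meson order_refl)
  ultimately show ?thesis unfolding u_def using \<gamma>_meas[OF i]
    by (intro borel_measurable_diff borel_measurable_sum) auto
qed

lemma AT_le: assumes i: "i \<in> I" shows "AE \<omega> in M. A T \<omega> \<le> \<pi>"
proof -
  define B where "B = {\<omega>\<in>space M. \<pi> < A T \<omega>}"
  have B: "B \<in> sets (F T)" unfolding B_def using A_adapted[OF order_refl] by (subst space_F[symmetric, of T]) (simp, measurable)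
  define H where "H = (\<lambda>\<omega>. - indicator B \<omega> :: real)"
  have H: "H \<in> borel_measurable (F T)" unfolding H_def using B by simp
  have g: "0 < - H \<omega> * A T \<omega> - \<pi> * (max 0 (u i \<omega> - H \<omega>) - max 0 (u i \<omega>))" if "\<omega> \<in> B" for \<omega>
  proof -
    have "max 0 (u i \<omega> + 1) - max 0 (u i \<omega>) \<le> 1" by simp
    then have "\<pi> * (max 0 (u i \<omega> + 1) - max 0 (u i \<omega>)) \<le> \<pi>" using pi_pos by (simp add: mult_left_le)
    then show ?thesis using that unfolding H_def B_def by simp
  qed
  have g0: "0 \<le> - H \<omega> * A T \<omega> - \<pi> * (max 0 (u i \<omega> - H \<omega>) - max 0 (u i \<omega>))" for \<omega>
    using g[of \<omega>] unfolding H_def by (cases "\<omega> \<in> B") auto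
  have "AE \<omega> in M. - H \<omega> * A T \<omega> - \<pi> * (max 0 (u i \<omega> - H \<omega>) - max 0 (u i \<omega>)) = 0"
    by (rule dev_T[OF i H], rule AE_I2, rule g0)
  from this AE_space show ?thesis by eventually_elim (use g[unfolded B_def] in fastforce)
qed

lemma AT_ge: assumes i: "i \<in> I" shows "AE \<omega> in M. 0 \<le> A T \<omega>"
proof -
  define B where "B = {\<omega>\<in>space M. A T \<omega> < 0}"
  have B: "B \<in> sets (F T)" unfolding B_def using A_adapted[OF order_refl] by (subst space_F[symmetric, of T]) (simp, measurable)
  define H where "H = (\<lambda>\<omega>. indicator B \<omega> :: real)"
  have H: "H \<in> borel_measurable (F T)" unfolding H_def using B by simp
  have g: "0 < - H \<omega> * A T \<omega> - \<pi> * (max 0 (u i \<omega> - H \<omega>) - max 0 (u i \<omega>))" if "\<omega> \<in> B" for \<omega>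
  proof -
    have "max 0 (u i \<omega> - 1) - max 0 (u i \<omega>) \<le> 0" by simp
    then have "\<pi> * (max 0 (u i \<omega> - 1) - max 0 (u i \<omega>)) \<le> 0" using pi_pos by (simp add: mult_nonneg_nonpos)
    then show ?thesis using that unfolding H_def B_def by simp
  qed
  have g0: "0 \<le> - H \<omega> * A T \<omega> - \<pi> * (max 0 (u i \<omega> - H \<omega>) - max 0 (u i \<omega>))" for \<omega>
    using g[of \<omega>] unfolding H_def by (cases "\<omega> \<in> B") auto
  have "AE \<omega> in M. - H \<omega> * A T \<omega> - \<pi> * (max 0 (u i \<omega> - H \<omega>) - max 0 (u i \<omega>)) = 0"
    by (rule dev_T[OF i H], rule AE_I2, rule g0)
  from this AE_space show ?thesis by eventually_elim (use g[unfolded B_def] in fastforce)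
qed

lemma cover_le: assumes i: "i \<in> I" shows "AE \<omega> in M. A T \<omega> < \<pi> \<longrightarrow> u i \<omega> \<le> 0"
proof -
  define B where "B = {\<omega>\<in>space M. A T \<omega> < \<pi>}"
  have B: "B \<in> sets (F T)" unfolding B_def using A_adapted[OF order_refl] by (subst space_F[symmetric, of T]) (simp, measurable)
  define H where "H = (\<lambda>\<omega>. indicator B \<omega> * max 0 (u i \<omega>) :: real)"
  have H: "H \<in> borel_measurable (F T)" unfolding H_def using B u_meas[OF i] by simp
  have g: "- H \<omega> * A T \<omega> - \<pi> * (max 0 (u i \<omega> - H \<omega>) - max 0 (u i \<omega>)) = indicator B \<omega> * max 0 (u i \<omega>) * (\<pi> - A T \<omega>)" for \<omega>
    unfolding H_def by (cases "\<omega> \<in> B"; cases "u i \<omega> \<ge> 0") (auto simp: algebra_simps)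
  have g0: "0 \<le> - H \<omega> * A T \<omega> - \<pi> * (max 0 (u i \<omega> - H \<omega>) - max 0 (u i \<omega>))" for \<omega>
    unfolding g B_def by (cases "A T \<omega> < \<pi>") auto
  have "AE \<omega> in M. - H \<omega> * A T \<omega> - \<pi> * (max 0 (u i \<omega> - H \<omega>) - max 0 (u i \<omega>)) = 0"
    by (rule dev_T[OF i H], rule AE_I2, rule g0)
  from this AE_space show ?thesis unfolding g B_def by eventually_elim (auto simp: max_def split: if_splits)
qed

lemma cover_ge: assumes i: "i \<in> I" shows "AE \<omega> in M. 0 < A T \<omega> \<longrightarrow> 0 \<le> u i \<omega>"
proof -
  define B where "B = {\<omega>\<in>space M. 0 < A T \<omega>}"
  have B: "B \<in> sets (F T)" unfolding B_def using A_adapted[OF order_refl] by (subst space_F[symmetric, of T]) (simp, measurable)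
  define H where "H = (\<lambda>\<omega>. - indicator B \<omega> * max 0 (- u i \<omega>) :: real)"
  have H: "H \<in> borel_measurable (F T)" unfolding H_def using B u_meas[OF i] by simp
  have g: "- H \<omega> * A T \<omega> - \<pi> * (max 0 (u i \<omega> - H \<omega>) - max 0 (u i \<omega>)) = indicator B \<omega> * max 0 (- u i \<omega>) * A T \<omega>" for \<omega>
    unfolding H_def by (cases "\<omega> \<in> B"; cases "u i \<omega> \<ge> 0") (auto simp: algebra_simps)
  have g0: "0 \<le> - H \<omega> * A T \<omega> - \<pi> * (max 0 (u i \<omega> - H \<omega>) - max 0 (u i \<omega>))" for \<omega>
    unfolding g B_def by (cases "0 < A T \<omega>") auto
  have "AE \<omega> in M. - H \<omega> * A T \<omega> - \<pi> * (max 0 (u i \<omega> - H \<omega>) - max 0 (u i \<omega>)) = 0"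
    by (rule dev_T[OF i H], rule AE_I2, rule g0)
  from this AE_space show ?thesis unfolding g B_def by eventually_elim (auto simp: max_def split: if_splits)
qed

lemma At_le: assumes i: "i \<in> I" and t: "t < T" shows "AE \<omega> in M. A t \<omega> \<le> \<pi>"
proof -
  define B where "B = {\<omega>\<in>space M. \<pi> < A t \<omega>}"
  have B: "B \<in> sets (F t)" unfolding B_def using A_adapted[OF less_imp_le[OF t]] t by (subst space_F[symmetric, of t]) (simp, measurable)
  define H where "H = (\<lambda>\<omega>. - indicator B \<omega> :: real)"
  have H: "H \<in> borel_measurable (F t)" unfolding H_def using B by simp
  have "AE \<omega> in M. 0 \<le> H \<omega> * (A T \<omega> - A t \<omega>)"
    using AT_le[OF i] unfolding H_def B_def by eventually_elim (auto simp: indicator_def)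
  from dev_pair[OF i t order_refl H this] AT_le[OF i] AE_space
  show ?thesis unfolding H_def B_def by eventually_elim (auto simp: indicator_def split: if_splits)
qed

lemma At_ge: assumes i: "i \<in> I" and t: "t < T" shows "AE \<omega> in M. 0 \<le> A t \<omega>"
proof -
  define B where "B = {\<omega>\<in>space M. A t \<omega> < 0}"
  have B: "B \<in> sets (F t)" unfolding B_def using A_adapted[OF less_imp_le[OF t]] t by (subst space_F[symmetric, of t]) (simp, measurable)
  define H where "H = (\<lambda>\<omega>. indicator B \<omega> :: real)"
  have H: "H \<in> borel_measurable (F t)" unfolding H_def using B by simp
  have "AE \<omega> in M. 0 \<le> H \<omega> * (A T \<omega> - A t \<omega>)"
    using AT_ge[OF i] unfolding H_def B_def by eventually_elim (auto simp: indicator_def)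
  from dev_pair[OF i t order_refl H this] AT_ge[OF i] AE_space
  show ?thesis unfolding H_def B_def by eventually_elim (auto simp: indicator_def split: if_splits)
qed

lemma A_bounds: assumes i: "i \<in> I" and t: "t \<le> T" shows "AE \<omega> in M. 0 \<le> A t \<omega> \<and> A t \<omega> \<le> \<pi>"
proof (cases "t = T")
  case True
  have "AE \<omega> in M. 0 \<le> A T \<omega> \<and> A T \<omega> \<le> \<pi>" using AT_le[OF i] AT_ge[OF i] by eventually_elim auto
  then show ?thesis using True by simp
next
  case False then have tT: "t < T" using t by simp
  show ?thesis using At_le[OF i tT] At_ge[OF i tT] by eventually_elim auto
qed

lemma NA: assumes i: "i \<in> I" and t: "t < T" and B: "B \<in> sets (F t)"
  shows "(AE \<omega> in M. \<omega> \<in> B \<longrightarrow> A t \<omega> \<le> A (Suc t) \<omega>) \<Longrightarrow> (AE \<omega> in M. \<omega> \<in> B \<longrightarrow> A (Suc t) \<omega> = A t \<omega>)"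
    and "(AE \<omega> in M. \<omega> \<in> B \<longrightarrow> A (Suc t) \<omega> \<le> A t \<omega>) \<Longrightarrow> (AE \<omega> in M. \<omega> \<in> B \<longrightarrow> A (Suc t) \<omega> = A t \<omega>)"
proof -
  have H1: "(\<lambda>\<omega>. indicator B \<omega> :: real) \<in> borel_measurable (F t)" using B by simp
  have H2: "(\<lambda>\<omega>. - indicator B \<omega> :: real) \<in> borel_measurable (F t)" using B by simp
  have ts: "t < Suc t" "Suc t \<le> T" using t by auto
  show "(AE \<omega> in M. \<omega> \<in> B \<longrightarrow> A t \<omega> \<le> A (Suc t) \<omega>) \<Longrightarrow> (AE \<omega> in M. \<omega> \<in> B \<longrightarrow> A (Suc t) \<omega> = A t \<omega>)"
  proof -
    assume a: "AE \<omega> in M. \<omega> \<in> B \<longrightarrow> A t \<omega> \<le> A (Suc t) \<omega>"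
    have "AE \<omega> in M. 0 \<le> indicator B \<omega> * (A (Suc t) \<omega> - A t \<omega>)"
      using a by eventually_elim (auto simp: indicator_def)
    from dev_pair[OF i ts H1 this] show ?thesis by eventually_elim (auto simp: indicator_def)
  qed
  show "(AE \<omega> in M. \<omega> \<in> B \<longrightarrow> A (Suc t) \<omega> \<le> A t \<omega>) \<Longrightarrow> (AE \<omega> in M. \<omega> \<in> B \<longrightarrow> A (Suc t) \<omega> = A t \<omega>)"
  proof -
    assume a: "AE \<omega> in M. \<omega> \<in> B \<longrightarrow> A (Suc t) \<omega> \<le> A t \<omega>"
    have "AE \<omega> in M. 0 \<le> - indicator B \<omega> * (A (Suc t) \<omega> - A t \<omega>)"
      using a by eventually_elim (auto simp: indicator_def)
    from dev_pair[OF i ts H2 this] show ?thesis by eventually_elim (auto simp: indicator_def)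
  qed
qed

end

context eqm
begin

lemma part_b: assumes i: "i \<in> I" and t: "t < T"
  shows "AE \<omega> in M. \<xi>s i t \<omega> = abatement (C i t) (E i t) (A t \<omega>) \<omega>"
proof -
  have At[measurable]: "A t \<in> borel_measurable (F t)" using A_adapted t by simp
  have xim[measurable]: "\<xi>s i t \<in> borel_measurable (F t)" using adm_xi[OF i t] .
  have Cxi[measurable]: "(\<lambda>\<omega>. C i t (\<xi>s i t \<omega>) \<omega>) \<in> borel_measurable (F t)"
    by (rule C_comp[OF i t xim]) (use adm_xi_bd[OF i t] in auto)
  have key: "AE \<omega> in M. C i t (\<xi>s i t \<omega>) \<omega> - A t \<omega> * \<xi>s i t \<omega> \<le> C i t (r * E i t \<omega>) \<omega> - A t \<omega> * (r * E i t \<omega>)"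
    if r: "r \<in> {r\<in>\<rat>. 0 \<le> r \<and> r \<le> 1}" for r
  proof -
    have r01: "0 \<le> r" "r \<le> 1" using r by auto
    have rE[measurable]: "(\<lambda>\<omega>. r * E i t \<omega>) \<in> borel_measurable (F t)" using E_adapted[OF i t] by simp
    have Cr[measurable]: "(\<lambda>\<omega>. C i t (r * E i t \<omega>) \<omega>) \<in> borel_measurable (F t)"
      by (rule C_comp[OF i t rE]) (use E_nonneg[OF i t] r01 in auto)
    define B where "B = {\<omega>\<in>space M. C i t (r * E i t \<omega>) \<omega> - A t \<omega> * (r * E i t \<omega>) < C i t (\<xi>s i t \<omega>) \<omega> - A t \<omega> * \<xi>s i t \<omega>}"
    have B: "B \<in> sets (F t)" unfolding B_def using t by (subst space_F[symmetric, of t]) (simp, measurable)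
    define X where "X = (\<lambda>\<omega>. if \<omega> \<in> B then r * E i t \<omega> else \<xi>s i t \<omega>)"
    have X: "X \<in> borel_measurable (F t)" unfolding X_def using B by (intro measurable_If_set) auto
    have Xb: "0 \<le> X \<omega> \<and> X \<omega> \<le> E i t \<omega>" if "\<omega> \<in> space M" for \<omega>
      using adm_xi_bd[OF i t that] E_nonneg[OF i t that] r01 unfolding X_def
      by (auto intro: mult_nonneg_nonneg mult_left_le_one_le)
    have g: "(C i t (\<xi>s i t \<omega>) \<omega> - A t \<omega> * \<xi>s i t \<omega>) - (C i t (X \<omega>) \<omega> - A t \<omega> * X \<omega>) =
      (if \<omega> \<in> B then (C i t (\<xi>s i t \<omega>) \<omega> - A t \<omega> * \<xi>s i t \<omega>) - (C i t (r * E i t \<omega>) \<omega> - A t \<omega> * (r * E i t \<omega>)) else 0)" for \<omega>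
      unfolding X_def by simp
    have "AE \<omega> in M. (C i t (\<xi>s i t \<omega>) \<omega> - A t \<omega> * \<xi>s i t \<omega>) - (C i t (X \<omega>) \<omega> - A t \<omega> * X \<omega>) = 0"
      by (rule dev_xi[OF i t X Xb], assumption, rule AE_I2) (auto simp: g B_def)
    from this AE_space show ?thesis by eventually_elim (auto simp: g B_def split: if_splits)
  qed
  have cnt: "countable {r\<in>\<rat>. 0 \<le> r \<and> r \<le> 1}" by (rule countable_subset[OF _ countable_rat]) auto
  have "AE \<omega> in M. \<forall>r\<in>{r\<in>\<rat>. 0 \<le> r \<and> r \<le> 1}. C i t (\<xi>s i t \<omega>) \<omega> - A t \<omega> * \<xi>s i t \<omega> \<le> C i t (r * E i t \<omega>) \<omega> - A t \<omega> * (r * E i t \<omega>)"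
    by (rule AE_ball_countable'[OF key cnt])
  from this AE_space show ?thesis
  proof eventually_elim
    case (elim \<omega>)
    have z: "\<xi>s i t \<omega> \<in> {0..E i t \<omega>}" using adm_xi_bd[OF i t elim(2)] by auto
    have "\<forall>y\<in>{0..E i t \<omega>}. C i t (\<xi>s i t \<omega>) \<omega> - A t \<omega> * \<xi>s i t \<omega> \<le> C i t y \<omega> - A t \<omega> * y"
      using rat_dense_min[OF C_cont[OF i t elim(2)] E_nonneg[OF i t elim(2)]] elim(1) by auto
    then show ?case using abatement_eq[where C="C i t" and E="E i t" and \<omega>=\<omega>, OF C_strict_convex[OF i t elim(2)] z] by simp
  qed
qed

end

context eqm
begin

lemma gam_M: "(\<lambda>\<omega>. \<Sum>i\<in>I. \<gamma> i \<omega>) \<in> borel_measurable M"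
  using \<gamma>_meas meas_M by (intro borel_measurable_sum) blast

lemma I_ne: "I \<noteq> {}"
proof
  assume I0: "I = {}"
  have "AE \<omega> in M. (\<Sum>i\<in>I. \<gamma> i \<omega>) \<noteq> (\<lambda>\<omega>. 0::real) \<omega>"
    by (rule no_atom_AE[OF P sub[of "T - 1"] \<gamma>_no_atoms gam_M]) simp_all
  then have "AE \<omega> in M. False" using I0 by simp
  then show False using prob_space.AE_False[OF P] by blast
qed

definition agg where "agg \<omega> = (\<Sum>i\<in>I. (\<Sum>t<T. E i t \<omega> - \<xi>s i t \<omega>) - \<gamma> i \<omega>)"

lemma agg_ne: "AE \<omega> in M. agg \<omega> \<noteq> 0"
proof -
  define X where "X = (\<lambda>\<omega>. \<Sum>i\<in>I. \<Sum>t<T. E i t \<omega> - \<xi>s i t \<omega>)"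
  have X: "X \<in> borel_measurable (F (T - 1))" unfolding X_def
  proof (intro borel_measurable_sum borel_measurable_diff)
    fix i t assume it: "i \<in> I" "t \<in> {..<T}"
    then have t: "t < T" "t \<le> T - 1" "T - 1 \<le> T" by auto
    show "E i t \<in> borel_measurable (F (T - 1))" by (rule meas_up[OF E_adapted[OF it(1) t(1)] t(2) t(3)])
    show "\<xi>s i t \<in> borel_measurable (F (T - 1))" by (rule meas_up[OF adm_xi[OF it(1) t(1)] t(2) t(3)])
  qed
  have "AE \<omega> in M. (\<Sum>i\<in>I. \<gamma> i \<omega>) \<noteq> X \<omega>"
    by (rule no_atom_AE[OF P sub[of "T - 1"] \<gamma>_no_atoms gam_M X]) simp
  then show ?thesis unfolding agg_def X_def by eventually_elim (simp add: sum_subtractf)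
qed

lemma sum_u: assumes \<omega>: "\<omega> \<in> space M" shows "(\<Sum>i\<in>I. u i \<omega>) = agg \<omega>"
proof -
  have "(\<Sum>i\<in>I. u i \<omega>) = (\<Sum>i\<in>I. ((\<Sum>t<T. E i t \<omega> - \<xi>s i t \<omega>) - \<gamma> i \<omega>) - (\<Sum>t<T. \<theta>s i t \<omega>) - \<theta>s i T \<omega>)"
    unfolding u_def by (intro sum.cong refl) (simp add: sum_subtractf)
  also have "\<dots> = agg \<omega> - (\<Sum>t<T. \<Sum>i\<in>I. \<theta>s i t \<omega>) - (\<Sum>i\<in>I. \<theta>s i T \<omega>)"
    unfolding agg_def by (simp add: sum_subtractf sum.swap[of _ I])
  also have "\<dots> = agg \<omega>" using eq_clear \<omega> by simp
  finally show ?thesis .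
qed

lemma part_c: "AE \<omega> in M. A T \<omega> = (if (\<Sum>i\<in>I. (\<Sum>t<T. E i t \<omega> - \<xi>s i t \<omega>) - \<gamma> i \<omega>) \<ge> 0 then \<pi> else 0)"
proof -
  obtain i0 where i0: "i0 \<in> I" using I_ne by auto
  have cI: "countable I" using I_fin by (rule countable_finite)
  have c1: "AE \<omega> in M. \<forall>i\<in>I. A T \<omega> < \<pi> \<longrightarrow> u i \<omega> \<le> 0"
    by (rule AE_ball_countable'[OF cover_le cI])
  have c2: "AE \<omega> in M. \<forall>i\<in>I. 0 < A T \<omega> \<longrightarrow> 0 \<le> u i \<omega>"
    by (rule AE_ball_countable'[OF cover_ge cI])
  from c1 c2 agg_ne A_bounds[OF i0 order_refl] AE_space
  show ?thesis unfolding agg_def[symmetric]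
  proof eventually_elim
    case (elim \<omega>)
    show ?case
    proof (cases "agg \<omega> \<ge> 0")
      case True
      have "\<not> A T \<omega> < \<pi>"
      proof
        assume "A T \<omega> < \<pi>"
        then have "(\<Sum>i\<in>I. u i \<omega>) \<le> 0" using elim(1) by (intro sum_nonpos) auto
        then show False using sum_u[OF elim(5)] True elim(3) by simp
      qed
      then show ?thesis using True elim(4) by simp
    next
      case False
      have "\<not> 0 < A T \<omega>"
      proof
        assume "0 < A T \<omega>"
        then have "0 \<le> (\<Sum>i\<in>I. u i \<omega>)" using elim(2) by (intro sum_nonneg) auto
        then show False using sum_u[OF elim(5)] False by simp
      qed
      then show ?thesis using False elim(4) by simp
    qed
  qed
qed

end

context eqm
begin

lemma sub_FF: "n \<le> m \<Longrightarrow> m \<le> T \<Longrightarrow> subalgebra (F m) (F n)"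
  unfolding subalgebra_def using mono_F[of n m] by simp

definition At where "At t \<omega> = max 0 (min \<pi> (A t \<omega>))"

lemma At_meas[measurable]: "t \<le> T \<Longrightarrow> At t \<in> borel_measurable (F t)"
  unfolding At_def using A_adapted by measurable

lemma At_bd: "0 \<le> At t \<omega>" "At t \<omega> \<le> \<pi>" unfolding At_def using pi_pos by auto

lemma At_eq: "t \<le> T \<Longrightarrow> AE \<omega> in M. At t \<omega> = A t \<omega>"
proof -
  assume t: "t \<le> T"
  obtain i0 where i0: "i0 \<in> I" using I_ne by auto
  show ?thesis using A_bounds[OF i0 t] unfolding At_def by eventually_elim auto
qed

lemma one_step_At: assumes k: "k < T"
  shows "\<exists>Z. Z \<in> borel_measurable (F (Suc k)) \<and> (\<forall>\<omega>. 0 \<le> Z \<omega>) \<and> (AE \<omega> in M. 0 < Z \<omega>) \<and>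
     (\<forall>g\<in>borel_measurable (F k). (\<integral>\<^sup>+\<omega>. g \<omega> * ennreal (Z \<omega>) \<partial>M) = (\<integral>\<^sup>+\<omega>. g \<omega> \<partial>M)) \<and>
     (\<forall>g\<in>borel_measurable (F k). (\<integral>\<^sup>+\<omega>. g \<omega> * ennreal (Z \<omega> * At (Suc k) \<omega>) \<partial>M) = (\<integral>\<^sup>+\<omega>. g \<omega> * ennreal (At k \<omega>) \<partial>M))"
proof (rule one_step[OF P sub sub mono_F])
  obtain i0 where i0: "i0 \<in> I" using I_ne by auto
  have e: "AE \<omega> in M. At k \<omega> = A k \<omega> \<and> At (Suc k) \<omega> = A (Suc k) \<omega>"
    using At_eq[of k] At_eq[of "Suc k"] k by (auto elim!: eventually_rev_mp intro!: AE_I2)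
  fix B assume B: "B \<in> sets (F k)"
  {
    assume "AE \<omega> in M. \<omega> \<in> B \<longrightarrow> At k \<omega> \<le> At (Suc k) \<omega>"
    then have "AE \<omega> in M. \<omega> \<in> B \<longrightarrow> A k \<omega> \<le> A (Suc k) \<omega>" using e by eventually_elim auto
    from NA(1)[OF i0 k B this] e show "AE \<omega> in M. \<omega> \<in> B \<longrightarrow> At (Suc k) \<omega> = At k \<omega>" by eventually_elim auto
  }
  {
    assume "AE \<omega> in M. \<omega> \<in> B \<longrightarrow> At (Suc k) \<omega> \<le> At k \<omega>"
    then have "AE \<omega> in M. \<omega> \<in> B \<longrightarrow> A (Suc k) \<omega> \<le> A k \<omega>" using e by eventually_elim auto
    from NA(2)[OF i0 k B this] e show "AE \<omega> in M. \<omega> \<in> B \<longrightarrow> At (Suc k) \<omega> = At k \<omega>" by eventually_elim auto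
  }
qed (use k At_bd in auto)


lemma part_a: "\<exists>Q. equiv_prob Q M \<and> martingale_on Q F T A"
proof -
  interpret prob_space M by (rule P)
  define OK where "OK k Z \<longleftrightarrow> (Z \<in> borel_measurable (F (Suc k)) \<and> (\<forall>\<omega>. 0 \<le> Z \<omega>) \<and> (AE \<omega> in M. 0 < Z \<omega>) \<and>
     (\<forall>g\<in>borel_measurable (F k). (\<integral>\<^sup>+\<omega>. g \<omega> * ennreal (Z \<omega>) \<partial>M) = (\<integral>\<^sup>+\<omega>. g \<omega> \<partial>M)) \<and>
     (\<forall>g\<in>borel_measurable (F k). (\<integral>\<^sup>+\<omega>. g \<omega> * ennreal (Z \<omega> * At (Suc k) \<omega>) \<partial>M) = (\<integral>\<^sup>+\<omega>. g \<omega> * ennreal (At k \<omega>) \<partial>M)))" for k Z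
  have "\<forall>k. \<exists>Z. k < T \<longrightarrow> OK k Z" unfolding OK_def using one_step_At by blast
  from choice[OF this] obtain Zs where Zs': "\<forall>k. k < T \<longrightarrow> OK k (Zs k)" by blast
  then have Zs: "\<And>k. k < T \<Longrightarrow> OK k (Zs k)" by blast
  have ZsH: "\<And>k. k < T \<Longrightarrow> Zs k \<in> borel_measurable (F (Suc k))" using Zs unfolding OK_def by blast
  have Zs0: "\<And>k \<omega>. k < T \<Longrightarrow> 0 \<le> Zs k \<omega>" using Zs unfolding OK_def by blast
  have Zspos: "\<And>k. k < T \<Longrightarrow> AE \<omega> in M. 0 < Zs k \<omega>" using Zs unfolding OK_def by blast
  have Zs1: "\<And>k g. k < T \<Longrightarrow> g \<in> borel_measurable (F k) \<Longrightarrow> (\<integral>\<^sup>+\<omega>. g \<omega> * ennreal (Zs k \<omega>) \<partial>M) = (\<integral>\<^sup>+\<omega>. g \<omega> \<partial>M)"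
    using Zs unfolding OK_def by blast
  have Zs2: "\<And>k g. k < T \<Longrightarrow> g \<in> borel_measurable (F k) \<Longrightarrow> (\<integral>\<^sup>+\<omega>. g \<omega> * ennreal (Zs k \<omega> * At (Suc k) \<omega>) \<partial>M) = (\<integral>\<^sup>+\<omega>. g \<omega> * ennreal (At k \<omega>) \<partial>M)"
    using Zs unfolding OK_def by blast
  define D where "D n \<omega> = (\<Prod>k<n. Zs k \<omega>)" for n \<omega>
  have DS: "D (Suc n) \<omega> = D n \<omega> * Zs n \<omega>" for n \<omega> unfolding D_def by simp
  have D00: "D 0 \<omega> = 1" for \<omega> unfolding D_def by simp
  have Dm: "n \<le> T \<Longrightarrow> D n \<in> borel_measurable (F n)" for n
  proof (induction n)
    case 0 then show ?case unfolding D_def by simp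
  next
    case (Suc n)
    then have "D n \<in> borel_measurable (F (Suc n))" using measurable_from_subalg[OF sub_FF[of n "Suc n"]] by auto
    moreover have "Zs n \<in> borel_measurable (F (Suc n))" using ZsH Suc by simp
    ultimately show ?case unfolding DS by (simp add: DS[abs_def])
  qed
  have D0: "n \<le> T \<Longrightarrow> 0 \<le> D n \<omega>" for n \<omega> unfolding D_def using Zs0 by (intro prod_nonneg) auto
  have Dstep1: "(\<integral>\<^sup>+\<omega>. g \<omega> * ennreal (D (Suc n) \<omega>) \<partial>M) = (\<integral>\<^sup>+\<omega>. g \<omega> * ennreal (D n \<omega>) \<partial>M)"
    if n: "n < T" and g: "g \<in> borel_measurable (F n)" for n g
  proof -
    have Dn[measurable]: "D n \<in> borel_measurable (F n)" using Dm[of n] n by simp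
    have gD: "(\<lambda>\<omega>. g \<omega> * ennreal (D n \<omega>)) \<in> borel_measurable (F n)" using g by measurable
    have "(\<integral>\<^sup>+\<omega>. g \<omega> * ennreal (D (Suc n) \<omega>) \<partial>M) = (\<integral>\<^sup>+\<omega>. g \<omega> * ennreal (D n \<omega>) * ennreal (Zs n \<omega>) \<partial>M)"
      using D0[of n] Zs0[of n] n by (intro nn_integral_cong) (simp add: DS ennreal_mult mult.assoc)
    also have "\<dots> = (\<integral>\<^sup>+\<omega>. g \<omega> * ennreal (D n \<omega>) \<partial>M)" by (rule Zs1[OF n gD])
    finally show ?thesis .
  qed
  have Dchain: "(\<integral>\<^sup>+\<omega>. g \<omega> * ennreal (D m \<omega>) \<partial>M) = (\<integral>\<^sup>+\<omega>. g \<omega> * ennreal (D n \<omega>) \<partial>M)"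
    if nm: "n \<le> m" "m \<le> T" and g: "g \<in> borel_measurable (F n)" for n m g
    using nm
  proof (induction m rule: dec_induct)
    case base then show ?case by simp
  next
    case (step m)
    have "g \<in> borel_measurable (F m)" using measurable_from_subalg[OF sub_FF[of n m] g] step by auto
    then show ?case using Dstep1[of m g] step by simp
  qed
  have Dstep2: "(\<integral>\<^sup>+\<omega>. g \<omega> * ennreal (D (Suc n) \<omega> * At (Suc n) \<omega>) \<partial>M) = (\<integral>\<^sup>+\<omega>. g \<omega> * ennreal (D n \<omega> * At n \<omega>) \<partial>M)"
    if n: "n < T" and g: "g \<in> borel_measurable (F n)" for n g
  proof -
    have Dn[measurable]: "D n \<in> borel_measurable (F n)" using Dm[of n] n by simp
    have gD: "(\<lambda>\<omega>. g \<omega> * ennreal (D n \<omega>)) \<in> borel_measurable (F n)" using g by measurable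
    have "(\<integral>\<^sup>+\<omega>. g \<omega> * ennreal (D (Suc n) \<omega> * At (Suc n) \<omega>) \<partial>M) = (\<integral>\<^sup>+\<omega>. g \<omega> * ennreal (D n \<omega>) * ennreal (Zs n \<omega> * At (Suc n) \<omega>) \<partial>M)"
      using D0[of n] Zs0[of n] At_bd n by (intro nn_integral_cong) (simp add: DS ennreal_mult mult.assoc)
    also have "\<dots> = (\<integral>\<^sup>+\<omega>. g \<omega> * ennreal (D n \<omega>) * ennreal (At n \<omega>) \<partial>M)" by (rule Zs2[OF n gD])
    also have "\<dots> = (\<integral>\<^sup>+\<omega>. g \<omega> * ennreal (D n \<omega> * At n \<omega>) \<partial>M)"
      using D0[of n] At_bd n by (intro nn_integral_cong) (simp add: ennreal_mult mult.assoc)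
    finally show ?thesis .
  qed
  have Dchain2: "(\<integral>\<^sup>+\<omega>. g \<omega> * ennreal (D m \<omega> * At m \<omega>) \<partial>M) = (\<integral>\<^sup>+\<omega>. g \<omega> * ennreal (D n \<omega> * At n \<omega>) \<partial>M)"
    if nm: "n \<le> m" "m \<le> T" and g: "g \<in> borel_measurable (F n)" for n m g
    using nm
  proof (induction m rule: dec_induct)
    case base then show ?case by simp
  next
    case (step m)
    have "g \<in> borel_measurable (F m)" using measurable_from_subalg[OF sub_FF[of n m] g] step by auto
    then show ?case using Dstep2[of m g] step by simp
  qed
  have mart_nn: "(\<integral>\<^sup>+\<omega>. indicator B \<omega> * ennreal (D T \<omega> * At t \<omega>) \<partial>M) = (\<integral>\<^sup>+\<omega>. indicator B \<omega> * ennreal (D T \<omega> * At s \<omega>) \<partial>M)"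
    if st: "s \<le> t" "t \<le> T" and B: "B \<in> sets (F s)" for s t B
  proof -
    have Bt: "B \<in> sets (F t)" using mono_F[OF st] B by auto
    have g1: "(\<lambda>\<omega>. indicator B \<omega> * ennreal (At t \<omega>)) \<in> borel_measurable (F t)" using Bt At_meas[OF st(2)] by measurable
    have g2: "(\<lambda>\<omega>. indicator B \<omega> * ennreal (At s \<omega>)) \<in> borel_measurable (F s)" using B At_meas[OF order_trans[OF st]] by measurable
    have g3: "(\<lambda>\<omega>. indicator B \<omega> :: ennreal) \<in> borel_measurable (F s)" using B by measurable
    have "(\<integral>\<^sup>+\<omega>. indicator B \<omega> * ennreal (D T \<omega> * At t \<omega>) \<partial>M) = (\<integral>\<^sup>+\<omega>. indicator B \<omega> * ennreal (At t \<omega>) * ennreal (D T \<omega>) \<partial>M)"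
      using D0[of T] At_bd by (intro nn_integral_cong) (simp add: ennreal_mult mult_ac)
    also have "\<dots> = (\<integral>\<^sup>+\<omega>. indicator B \<omega> * ennreal (At t \<omega>) * ennreal (D t \<omega>) \<partial>M)"
      by (rule Dchain[OF st(2) order_refl g1])
    also have "\<dots> = (\<integral>\<^sup>+\<omega>. indicator B \<omega> * ennreal (D t \<omega> * At t \<omega>) \<partial>M)"
      using D0[of t] At_bd st by (intro nn_integral_cong) (simp add: ennreal_mult mult_ac)
    also have "\<dots> = (\<integral>\<^sup>+\<omega>. indicator B \<omega> * ennreal (D s \<omega> * At s \<omega>) \<partial>M)"
      by (rule Dchain2[OF st g3])
    also have "\<dots> = (\<integral>\<^sup>+\<omega>. indicator B \<omega> * ennreal (At s \<omega>) * ennreal (D s \<omega>) \<partial>M)"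
      using D0[of s] At_bd st by (intro nn_integral_cong) (simp add: ennreal_mult mult_ac)
    also have "\<dots> = (\<integral>\<^sup>+\<omega>. indicator B \<omega> * ennreal (At s \<omega>) * ennreal (D T \<omega>) \<partial>M)"
      by (rule Dchain[OF _ order_refl g2, symmetric]) (use st in auto)
    also have "\<dots> = (\<integral>\<^sup>+\<omega>. indicator B \<omega> * ennreal (D T \<omega> * At s \<omega>) \<partial>M)"
      using D0[of T] At_bd by (intro nn_integral_cong) (simp add: ennreal_mult mult_ac)
    finally show ?thesis .
  qed
  have DTM[measurable]: "D T \<in> borel_measurable M" using meas_M[OF Dm[OF order_refl] order_refl] .
  have mass: "(\<integral>\<^sup>+\<omega>. ennreal (D T \<omega>) \<partial>M) = 1"
  proof -
    have "(\<integral>\<^sup>+\<omega>. ennreal (D T \<omega>) \<partial>M) = (\<integral>\<^sup>+\<omega>. 1 * ennreal (D T \<omega>) \<partial>M)" by simp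
    also have "\<dots> = (\<integral>\<^sup>+\<omega>. 1 * ennreal (D 0 \<omega>) \<partial>M)" by (rule Dchain) auto
    also have "\<dots> = 1" by (simp add: D00 emeasure_space_1)
    finally show ?thesis .
  qed
  have DTpos: "AE \<omega> in M. 0 < D T \<omega>"
  proof -
    have "AE \<omega> in M. \<forall>k\<in>{..<T}. 0 < Zs k \<omega>" by (rule AE_ball_countable') (use Zspos in auto)
    then show ?thesis unfolding D_def by eventually_elim (auto intro: prod_pos)
  qed
  define Q where "Q = density M (\<lambda>\<omega>. ennreal (D T \<omega>))"
  have sQ: "sets Q = sets M" and spQ: "space Q = space M" unfolding Q_def by auto
  have PQ: "prob_space Q"
  proof (rule prob_spaceI)
    have "emeasure Q (space M) = (\<integral>\<^sup>+\<omega>. ennreal (D T \<omega>) * indicator (space M) \<omega> \<partial>M)"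
      unfolding Q_def by (rule emeasure_density) auto
    also have "\<dots> = (\<integral>\<^sup>+\<omega>. ennreal (D T \<omega>) \<partial>M)" by (intro nn_integral_cong) auto
    finally show "emeasure Q (space Q) = 1" using mass spQ by simp
  qed
  have eqv: "equiv_prob Q M"
    unfolding equiv_prob_def
  proof (intro conjI ballI PQ sQ)
    fix N assume N: "N \<in> sets M"
    have "emeasure Q N = 0 \<longleftrightarrow> N \<in> null_sets Q" using N sQ by (auto simp: null_sets_def)
    also have "\<dots> \<longleftrightarrow> (AE x in M. x \<in> N \<longrightarrow> ennreal (D T x) = 0)"
      unfolding Q_def using N by (subst null_sets_density_iff) auto
    also have "\<dots> \<longleftrightarrow> (AE x in M. x \<notin> N)"
    proof
      assume "AE x in M. x \<in> N \<longrightarrow> ennreal (D T x) = 0"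
      then show "AE x in M. x \<notin> N" using DTpos by eventually_elim auto
    qed (auto elim: eventually_mono)
    also have "\<dots> \<longleftrightarrow> emeasure M N = 0"
      using AE_iff_measurable[OF N, of "\<lambda>x. x \<notin> N"] N sets.sets_into_space by auto
    finally show "emeasure Q N = 0 \<longleftrightarrow> emeasure M N = 0" .
  qed
  have DTint: "integrable M (D T)"
    by (rule integrableI_nonneg) (use D0[of T] mass in auto)
  have Am: "t \<le> T \<Longrightarrow> A t \<in> borel_measurable M" for t using A_M by blast
  have intQ: "integrable Q (A t)" if t: "t \<le> T" for t
  proof -
    have "integrable M (\<lambda>x. D T x *\<^sub>R A t x)"
    proof (rule Bochner_Integration.integrable_bound[OF integrable_mult_right[OF DTint, of \<pi>]])
      show "(\<lambda>x. D T x *\<^sub>R A t x) \<in> borel_measurable M" using Am[OF t] by measurable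
      show "AE x in M. norm (D T x *\<^sub>R A t x) \<le> norm (\<pi> * D T x)"
        using At_eq[OF t]
      proof eventually_elim
        case (elim x)
        have d: "0 \<le> D T x" using D0 by simp
        have "D T x * At t x \<le> D T x * \<pi>" using d At_bd[of t x] by (intro mult_left_mono) auto
        then show ?case using d At_bd[of t x] pi_pos elim by (simp add: abs_mult mult.commute)
      qed
    qed
    then show ?thesis unfolding Q_def using Am[OF t] D0[of T] by (subst integrable_density) auto
  qed
  have setint: "(\<integral>x\<in>B. A t x \<partial>Q) = enn2real (\<integral>\<^sup>+\<omega>. indicator B \<omega> * ennreal (D T \<omega> * At t \<omega>) \<partial>M)"
    if t: "t \<le> T" and B: "B \<in> sets M" for t B
  proof -
    have "(\<integral>x\<in>B. A t x \<partial>Q) = (\<integral>x. indicator B x *\<^sub>R A t x \<partial>Q)" unfolding set_lebesgue_integral_def ..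
    also have "\<dots> = (\<integral>x. D T x *\<^sub>R (indicator B x *\<^sub>R A t x) \<partial>M)"
      unfolding Q_def using B Am[OF t] D0[of T] by (subst integral_density) auto
    also have "\<dots> = enn2real (\<integral>\<^sup>+x. ennreal (D T x *\<^sub>R (indicator B x *\<^sub>R A t x)) \<partial>M)"
    proof (rule integral_eq_nn_integral)
      show "(\<lambda>x. D T x *\<^sub>R (indicator B x *\<^sub>R A t x)) \<in> borel_measurable M" using B Am[OF t] by measurable
      show "AE x in M. 0 \<le> D T x *\<^sub>R (indicator B x *\<^sub>R A t x)"
        using At_eq[OF t]
      proof eventually_elim
        case (elim x)
        have "0 \<le> D T x" using D0 by simp
        then show ?case using At_bd[of t x] elim by (auto simp: indicator_def)
      qed
    qed
    also have "(\<integral>\<^sup>+x. ennreal (D T x *\<^sub>R (indicator B x *\<^sub>R A t x)) \<partial>M) = (\<integral>\<^sup>+\<omega>. indicator B \<omega> * ennreal (D T \<omega> * At t \<omega>) \<partial>M)"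
      by (rule nn_integral_cong_AE) (use At_eq[OF t] in \<open>eventually_elim, simp add: indicator_def\<close>)
    finally show ?thesis .
  qed
  have mart: "martingale_on Q F T A"
    unfolding martingale_on_def
  proof (intro conjI allI impI)
    fix t assume t: "t \<le> T"
    show "A t \<in> borel_measurable (F t)" using A_adapted[OF t] .
    show "integrable Q (A t)" by (rule intQ[OF t])
  next
    fix s t assume st: "s \<le> t" "t \<le> T"
    have subQ: "subalgebra Q (F s)" using sub[of s] st sQ spQ unfolding subalgebra_def by auto
    interpret fms: finite_measure_subalgebra Q "F s"
      by (intro finite_measure_subalgebra.intro finite_measure_subalgebra_axioms.intro subQ)
         (use PQ in \<open>simp add: prob_space_def\<close>)
    show "AE \<omega> in Q. real_cond_exp Q (F s) (A t) \<omega> = A s \<omega>"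
    proof (rule fms.real_cond_exp_charact)
      fix B assume B: "B \<in> sets (F s)"
      then have BM: "B \<in> sets M" using sets_F[of s] st by auto
      show "(\<integral>x\<in>B. A t x \<partial>Q) = (\<integral>x\<in>B. A s x \<partial>Q)"
        using setint[OF st(2) BM] setint[OF order_trans[OF st] BM] mart_nn[OF st B] by simp
    qed (use intQ st A_adapted in auto)
  qed
  show ?thesis using eqv mart by blast
qed

lemma main: "(\<exists>Q. equiv_prob Q M \<and> martingale_on Q F T A)
    \<and> (\<forall>i\<in>I. \<forall>t<T. AE \<omega> in M. \<xi>s i t \<omega> = abatement (C i t) (E i t) (A t \<omega>) \<omega>)
    \<and> (AE \<omega> in M. A T \<omega> =
         (if (\<Sum>i\<in>I. (\<Sum>t<T. E i t \<omega> - \<xi>s i t \<omega>) - \<gamma> i \<omega>) \<ge> 0 then \<pi> else 0))"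
  using part_a part_b part_c by blast

end

theorem proposition1:
  fixes M :: "'a measure" and F :: "nat \<Rightarrow> 'a measure" and T :: nat
    and I :: "'i set"
    and E :: "'i \<Rightarrow> nat \<Rightarrow> 'a \<Rightarrow> real"
    and C :: "'i \<Rightarrow> nat \<Rightarrow> real \<Rightarrow> 'a \<Rightarrow> real"
    and \<pi> :: real and \<gamma> :: "'i \<Rightarrow> 'a \<Rightarrow> real"
    and U :: "'i \<Rightarrow> real \<Rightarrow> real"
    and A :: "nat \<Rightarrow> 'a \<Rightarrow> real"
    and \<theta>s :: "'i \<Rightarrow> nat \<Rightarrow> 'a \<Rightarrow> real" and \<xi>s :: "'i \<Rightarrow> nat \<Rightarrow> 'a \<Rightarrow> real"
  assumes P: "prob_space M"
    and filt: "filtration_on M F T"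
    and F0_trivial: "sets (F 0) = {{}, space M}"
    and I_fin: "finite I"
    and E_adapted: "\<And>i t. i \<in> I \<Longrightarrow> t < T \<Longrightarrow> E i t \<in> borel_measurable (F t)"
    and E_nonneg: "\<And>i t \<omega>. i \<in> I \<Longrightarrow> t < T \<Longrightarrow> \<omega> \<in> space M \<Longrightarrow> 0 \<le> E i t \<omega>"
    and C_meas: "\<And>i t. i \<in> I \<Longrightarrow> t < T \<Longrightarrow>
        (\<lambda>(x, \<omega>). C i t x \<omega>) \<in> borel_measurable (restrict_space borel {0::real..} \<Otimes>\<^sub>M F t)"
    and C_strict_convex: "\<And>i t \<omega>. i \<in> I \<Longrightarrow> t < T \<Longrightarrow> \<omega> \<in> space M \<Longrightarrow>
        strict_convex_on {0..} (\<lambda>x. C i t x \<omega>)"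
    and C_cont: "\<And>i t \<omega>. i \<in> I \<Longrightarrow> t < T \<Longrightarrow> \<omega> \<in> space M \<Longrightarrow>
        continuous_on {0..} (\<lambda>x. C i t x \<omega>)"
    and C_zero: "\<And>i t \<omega>. i \<in> I \<Longrightarrow> t < T \<Longrightarrow> \<omega> \<in> space M \<Longrightarrow> C i t 0 \<omega> = 0"
    and pi_pos: "\<pi> > 0"
    and \<gamma>_meas: "\<And>i. i \<in> I \<Longrightarrow> \<gamma> i \<in> borel_measurable (F T)"
    and \<gamma>_no_atoms: "cond_distr_no_atoms M (F (T - 1)) (\<lambda>\<omega>. \<Sum>i\<in>I. \<gamma> i \<omega>)"
    and U_cont: "\<And>i. i \<in> I \<Longrightarrow> continuous_on UNIV (U i)"
    and U_mono: "\<And>i. i \<in> I \<Longrightarrow> strict_mono (U i)"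
    and U_concave: "\<And>i. i \<in> I \<Longrightarrow> concave_on UNIV (U i)"
    and A_adapted: "\<And>t. t \<le> T \<Longrightarrow> A t \<in> borel_measurable (F t)"
    and eq_adm: "\<And>i. i \<in> I \<Longrightarrow> admissible M F T (E i) (\<theta>s i) (\<xi>s i)"
    and eq_finite: "\<And>i. i \<in> I \<Longrightarrow>
        util_exists M (\<lambda>\<omega>. U i (wealth T \<pi> A (C i) (E i) (\<gamma> i) (\<theta>s i) (\<xi>s i) \<omega>)) \<and>
        \<bar>util_val M (\<lambda>\<omega>. U i (wealth T \<pi> A (C i) (E i) (\<gamma> i) (\<theta>s i) (\<xi>s i) \<omega>))\<bar> \<noteq> \<infinity>"
    and eq_clear: "\<And>t \<omega>. t \<le> T \<Longrightarrow> \<omega> \<in> space M \<Longrightarrow> (\<Sum>i\<in>I. \<theta>s i t \<omega>) = 0"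
    and eq_opt: "\<And>i \<theta> \<xi>. i \<in> I \<Longrightarrow> admissible M F T (E i) \<theta> \<xi> \<Longrightarrow>
        util_exists M (\<lambda>\<omega>. U i (wealth T \<pi> A (C i) (E i) (\<gamma> i) \<theta> \<xi> \<omega>)) \<Longrightarrow>
        util_val M (\<lambda>\<omega>. U i (wealth T \<pi> A (C i) (E i) (\<gamma> i) \<theta> \<xi> \<omega>))
          \<le> util_val M (\<lambda>\<omega>. U i (wealth T \<pi> A (C i) (E i) (\<gamma> i) (\<theta>s i) (\<xi>s i) \<omega>))"
  shows "(\<exists>Q. equiv_prob Q M \<and> martingale_on Q F T A)
    \<and> (\<forall>i\<in>I. \<forall>t<T. AE \<omega> in M. \<xi>s i t \<omega> = abatement (C i t) (E i t) (A t \<omega>) \<omega>)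
    \<and> (AE \<omega> in M. A T \<omega> =
         (if (\<Sum>i\<in>I. (\<Sum>t<T. E i t \<omega> - \<xi>s i t \<omega>) - \<gamma> i \<omega>) \<ge> 0 then \<pi> else 0))"
  proof -
  interpret eqm M F T I E C \<pi> \<gamma> U A \<theta>s \<xi>s by (rule eqm.intro[OF assms])
  show ?thesis by (rule main)
qed

end
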